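(* Let $a>0$, $b\ge0$, and assume $A:=a+\beta-1<0$. Then $$\limsup_{N\to\infty}N^{-\chi\beta+bA}\,\mathbb E\Big[\sum_{k=1}^N w_{I^N_k}^a\,\mathbf 1\{w_{I^N_k}\ge N^{-b}\}\Big]\le(1-\beta)\frac{1}{|A|}.$$ The same holds if $I^N$ is replaced by $J^N$, $N$ i.i.d. draws with replacement from $\{1,\dots,\lceil N^\gamma\rceil\}$ with $\mathbb P(J^N_k=i\mid\Xi)=w_i^\beta/\sum_{j=1}^{\lceil N^\gamma\rceil}w_j^\beta$.
   Context: Fix $\gamma>1$, $\beta\in(0,1)$, $\chi=\frac{1-\gamma(1-\beta)}{\beta}$. $\Xi$ is a Poisson point process on $(0,\infty)$ with intensity $x^{-2}dx$ and atoms $w_1>w_2>\cdots$. Conditionally on $\Xi$, $I^N=(I^N_1,\dots,I^N_N)$ are $N$ indices sampled without replacement from $\{1,\dots,\lceil N^\gamma\rceil\}$ with weights $w_i^\beta$ (each successive draw picks a not-yet-drawn index $i$ with probability proportional to $w_i^\beta$ among the not-yet-drawn ones). *)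

theory Defs
  imports "HOL-Probability.Probability"
begin

text \<open>Poisson point process on (0,inf) with intensity x^-2 dx, atoms w_1 > w_2 > ...
  Realised via the standard representation w_i = 1/Gamma_i, Gamma_i = E_1+...+E_i,
  with E_j i.i.d. Exp(1) (the image of the process under x -> 1/x is a unit-rate
  Poisson process on (0,inf), whose ordered points are Gamma_1 < Gamma_2 < ...).\<close>

definition Xi_space :: "(nat \<Rightarrow> real) measure" where
  "Xi_space = PiM UNIV (\<lambda>_. density lborel (\<lambda>x. ennreal (exponential_density 1 x)))"

text \<open>The i-th largest atom (i >= 1): w_i = 1 / (e 0 + ... + e (i-1)).\<close>
definition pp_atom :: "(nat \<Rightarrow> real) \<Rightarrow> nat \<Rightarrow> real" where
  "pp_atom e i = 1 / (\<Sum>j<i. e j)"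

definition weighted_draw :: "(nat \<Rightarrow> real) \<Rightarrow> nat list \<Rightarrow> nat pmf" where
  "weighted_draw v R = pmf_of_list (map (\<lambda>i. (i, v i / (\<Sum>j\<leftarrow>R. v j))) R)"

primrec succ_sample :: "(nat \<Rightarrow> real) \<Rightarrow> nat \<Rightarrow> nat list \<Rightarrow> nat list pmf" where
  "succ_sample v 0 R = return_pmf []"
| "succ_sample v (Suc n) R =
     bind_pmf (weighted_draw v R) (\<lambda>i. map_pmf (Cons i) (succ_sample v n (removeAll i R)))"

primrec iid_sample :: "(nat \<Rightarrow> real) \<Rightarrow> nat \<Rightarrow> nat list \<Rightarrow> nat list pmf" where
  "iid_sample v 0 R = return_pmf []"
| "iid_sample v (Suc n) R =
     bind_pmf (weighted_draw v R) (\<lambda>i. map_pmf (Cons i) (iid_sample v n R))"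

definition index_range :: "real \<Rightarrow> nat \<Rightarrow> nat list" where
  "index_range \<gamma> N = [1..<nat \<lceil>real N powr \<gamma>\<rceil> + 1]"

definition I_sample :: "real \<Rightarrow> real \<Rightarrow> nat \<Rightarrow> (nat \<Rightarrow> real) \<Rightarrow> nat list pmf" where
  "I_sample \<gamma> \<beta> N e = succ_sample (\<lambda>i. pp_atom e i powr \<beta>) N (index_range \<gamma> N)"

definition J_sample :: "real \<Rightarrow> real \<Rightarrow> nat \<Rightarrow> (nat \<Rightarrow> real) \<Rightarrow> nat list pmf" where
  "J_sample \<gamma> \<beta> N e = iid_sample (\<lambda>i. pp_atom e i powr \<beta>) N (index_range \<gamma> N)"

text \<open>E[ sum_k f(w_{K_k}) ] for a sample K with conditional law samp e given Xi
  (total expectation = integral over Xi of the conditional expectation).\<close>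
definition total_expect ::
  "((nat \<Rightarrow> real) \<Rightarrow> nat list pmf) \<Rightarrow> (real \<Rightarrow> real) \<Rightarrow> ennreal" where
  "total_expect samp f =
     (\<integral>\<^sup>+ e. (\<integral>\<^sup>+ ks. ennreal (\<Sum>k\<leftarrow>ks. f (pp_atom e k)) \<partial>measure_pmf (samp e)) \<partial>Xi_space)"

end

theory Submission
  imports Defs "HOL-Real_Asymp.Real_Asymp"
begin


lemma filter_eq_distinct:
  "distinct R \<Longrightarrow> filter (\<lambda>i. i = x) R = (if x \<in> set R then [x] else [])"
  by (induction R) auto

lemma weighted_draw_nn_integral:
  fixes v :: "nat \<Rightarrow> real" and g :: "nat \<Rightarrow> ennreal"
  assumes dR: "distinct R" and pos: "\<And>i. i \<in> set R \<Longrightarrow> v i > 0" and ne: "R \<noteq> []"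
  shows "(\<integral>\<^sup>+i. g i \<partial>measure_pmf (weighted_draw v R)) =
         (\<Sum>i\<in>set R. g i * ennreal (v i / (\<Sum>j\<in>set R. v j)))"
proof -
  define S where "S = (\<Sum>j\<in>set R. v j)"
  have Sl: "(\<Sum>j\<leftarrow>R. v j) = S" unfolding S_def using dR by (simp add: sum_list_distinct_conv_sum_set)
  have Spos: "S > 0" unfolding S_def using pos ne by (intro sum_pos) auto
  have wf: "pmf_of_list_wf (map (\<lambda>i. (i, v i / S)) R)"
  proof (rule pmf_of_list_wfI)
    show "x \<in> set (map snd (map (\<lambda>i. (i, v i / S)) R)) \<Longrightarrow> 0 \<le> x" for x
      using pos Spos by (auto intro!: divide_nonneg_pos less_imp_le)
    have "sum_list (map snd (map (\<lambda>i. (i, v i / S)) R)) = (\<Sum>i\<in>set R. v i / S)"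
      using dR by (simp add: o_def sum_list_distinct_conv_sum_set)
    also have "\<dots> = 1" using Spos by (simp add: sum_divide_distrib[symmetric] S_def)
    finally show "sum_list (map snd (map (\<lambda>i. (i, v i / S)) R)) = 1" .
  qed
  have wd: "weighted_draw v R = pmf_of_list (map (\<lambda>i. (i, v i / S)) R)"
    unfolding weighted_draw_def Sl ..
  have pm: "pmf (weighted_draw v R) x = v x / S" if "x \<in> set R" for x
    unfolding wd using that dR
    by (simp add: pmf_pmf_of_list[OF wf] filter_map o_def filter_eq_distinct)
  have "(\<integral>\<^sup>+i. g i \<partial>measure_pmf (weighted_draw v R)) = (\<Sum>i\<in>set R. g i * pmf (weighted_draw v R) i)"
    apply (rule nn_integral_measure_pmf_support)
    using set_pmf_of_list[OF wf] unfolding wd by auto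
  also have "\<dots> = (\<Sum>i\<in>set R. g i * ennreal (v i / S))"
    by (intro sum.cong) (auto simp: pm)
  finally show ?thesis unfolding S_def .
qed



lemma sum_aux_eq:
  fixes f v :: "nat \<Rightarrow> real"
  shows "(\<Sum>i\<in>A. (f i + c) * (v i / (\<Sum>j\<in>A. v j))) = (\<Sum>i\<in>A. f i * v i) / (\<Sum>j\<in>A. v j) + c * ((\<Sum>j\<in>A. v j) / (\<Sum>j\<in>A. v j))"
proof -
  have "(\<Sum>i\<in>A. (f i + c) * (v i / (\<Sum>j\<in>A. v j))) = (\<Sum>i\<in>A. f i * v i / (\<Sum>j\<in>A. v j) + c * (v i / (\<Sum>j\<in>A. v j)))"
    by (intro sum.cong) (auto simp: algebra_simps add_divide_distrib)
  also have "\<dots> = (\<Sum>i\<in>A. f i * v i) / (\<Sum>j\<in>A. v j) + c * ((\<Sum>j\<in>A. v j) / (\<Sum>j\<in>A. v j))"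
    by (simp add: sum.distrib sum_divide_distrib[symmetric] sum_distrib_left[symmetric])
  finally show ?thesis .
qed

lemma succ_sample_bound:
  fixes v f :: "nat \<Rightarrow> real" and D :: real
  assumes "D > 0" and "\<And>i. f i \<ge> 0"
  shows "distinct R \<Longrightarrow> (\<forall>i\<in>set R. v i > 0) \<Longrightarrow>
    (\<forall>S. S \<subseteq> set R \<longrightarrow> length R + 1 \<le> card S + n \<longrightarrow> D \<le> (\<Sum>j\<in>S. v j)) \<Longrightarrow>
    (\<integral>\<^sup>+ks. ennreal (\<Sum>k\<leftarrow>ks. f k) \<partial>measure_pmf (succ_sample v n R))
      \<le> ennreal (real n * (\<Sum>i\<in>set R. f i * v i) / D)"
proof (induction n arbitrary: R)
  case 0
  then show ?case by simp
next
  case (Suc n)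
  define T where "T = (\<Sum>i\<in>set R. f i * v i)"
  define S where "S = (\<Sum>j\<in>set R. v j)"
  have Rne: "R \<noteq> []"
  proof
    assume "R = []"
    with Suc.prems(3) have "D \<le> 0" by (auto dest: spec[of _ "{}"])
    with \<open>D > 0\<close> show False by simp
  qed
  have SD: "D \<le> S" unfolding S_def using Suc.prems(3) Suc.prems(1)
    by (auto dest!: spec[of _ "set R"] simp: distinct_card)
  have Tnn: "T \<ge> 0" unfolding T_def using Suc.prems(2) assms(2)
    by (intro sum_nonneg) (auto intro: mult_nonneg_nonneg less_imp_le)
  have IH: "(\<integral>\<^sup>+ks. ennreal (\<Sum>k\<leftarrow>ks. f k) \<partial>measure_pmf (succ_sample v n (removeAll i R)))
      \<le> ennreal (real n * T / D)" if i: "i \<in> set R" for i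
  proof -
    have "(\<integral>\<^sup>+ks. ennreal (\<Sum>k\<leftarrow>ks. f k) \<partial>measure_pmf (succ_sample v n (removeAll i R)))
      \<le> ennreal (real n * (\<Sum>j\<in>set (removeAll i R). f j * v j) / D)"
    proof (rule Suc.IH)
      show "distinct (removeAll i R)" using Suc.prems(1) by (simp add: distinct_removeAll)
      show "\<forall>i\<in>set (removeAll i R). 0 < v i" using Suc.prems(2) by auto
      have len: "length (removeAll i R) + 1 = length R"
        using Suc.prems(1) i by (simp add: distinct_remove1_removeAll[symmetric] length_remove1)
          (metis One_nat_def Suc_pred length_pos_if_in_set)
      show "\<forall>S. S \<subseteq> set (removeAll i R) \<longrightarrow> length (removeAll i R) + 1 \<le> card S + n \<longrightarrow> D \<le> sum v S"
        using Suc.prems(3) len by auto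
    qed
    also have "\<dots> \<le> ennreal (real n * T / D)"
    proof (intro ennreal_leI divide_right_mono mult_left_mono)
      show "(\<Sum>j\<in>set (removeAll i R). f j * v j) \<le> T" unfolding T_def
        using Suc.prems(2) assms(2) by (intro sum_mono2) (auto intro: mult_nonneg_nonneg less_imp_le)
    qed (use \<open>D > 0\<close> in auto)
    finally show ?thesis .
  qed
  have "(\<integral>\<^sup>+ks. ennreal (\<Sum>k\<leftarrow>ks. f k) \<partial>measure_pmf (succ_sample v (Suc n) R))
     = (\<integral>\<^sup>+i. (\<integral>\<^sup>+ks. ennreal (f i + (\<Sum>k\<leftarrow>ks. f k)) \<partial>measure_pmf (succ_sample v n (removeAll i R)))
          \<partial>measure_pmf (weighted_draw v R))"
    by simp
  also have "\<dots> = (\<integral>\<^sup>+i. ennreal (f i) + (\<integral>\<^sup>+ks. ennreal (\<Sum>k\<leftarrow>ks. f k) \<partial>measure_pmf (succ_sample v n (removeAll i R)))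
          \<partial>measure_pmf (weighted_draw v R))"
  proof (intro nn_integral_cong)
    fix i
    have "(\<integral>\<^sup>+ks. ennreal (f i + (\<Sum>k\<leftarrow>ks. f k)) \<partial>measure_pmf (succ_sample v n (removeAll i R)))
       = (\<integral>\<^sup>+ks. ennreal (f i) + ennreal (\<Sum>k\<leftarrow>ks. f k) \<partial>measure_pmf (succ_sample v n (removeAll i R)))"
      using assms(2) by (intro nn_integral_cong ennreal_plus) (auto intro!: sum_list_nonneg)
    also have "\<dots> = ennreal (f i) + (\<integral>\<^sup>+ks. ennreal (\<Sum>k\<leftarrow>ks. f k) \<partial>measure_pmf (succ_sample v n (removeAll i R)))"
      by (subst nn_integral_add) (auto simp: measure_pmf.emeasure_space_1)
    finally show "(\<integral>\<^sup>+ks. ennreal (f i + (\<Sum>k\<leftarrow>ks. f k)) \<partial>measure_pmf (succ_sample v n (removeAll i R))) = \<dots>" .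
  qed
  also have "\<dots> = (\<Sum>i\<in>set R. (ennreal (f i) + (\<integral>\<^sup>+ks. ennreal (\<Sum>k\<leftarrow>ks. f k) \<partial>measure_pmf (succ_sample v n (removeAll i R)))) * ennreal (v i / S))"
    unfolding S_def by (rule weighted_draw_nn_integral[OF Suc.prems(1) _ Rne]) (use Suc.prems(2) in auto)
  also have "\<dots> \<le> (\<Sum>i\<in>set R. ennreal ((f i + real n * T / D) * (v i / S)))"
  proof (intro sum_mono)
    fix i assume i: "i \<in> set R"
    have "(ennreal (f i) + (\<integral>\<^sup>+ks. ennreal (\<Sum>k\<leftarrow>ks. f k) \<partial>measure_pmf (succ_sample v n (removeAll i R)))) * ennreal (v i / S)
       \<le> (ennreal (f i) + ennreal (real n * T / D)) * ennreal (v i / S)"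
      by (intro mult_right_mono add_left_mono IH[OF i]) auto
    also have "\<dots> = ennreal (f i + real n * T / D) * ennreal (v i / S)"
      using assms Tnn by (subst ennreal_plus) (auto intro!: divide_nonneg_pos mult_nonneg_nonneg)
    also have "\<dots> = ennreal ((f i + real n * T / D) * (v i / S))"
      using assms Tnn i Suc.prems(2) SD by (intro ennreal_mult[symmetric]) (auto intro!: add_nonneg_nonneg divide_nonneg_pos mult_nonneg_nonneg less_imp_le)
    finally show "(ennreal (f i) + (\<integral>\<^sup>+ks. ennreal (\<Sum>k\<leftarrow>ks. f k) \<partial>measure_pmf (succ_sample v n (removeAll i R)))) * ennreal (v i / S) \<le> \<dots>" .
  qed
  also have "\<dots> = ennreal (\<Sum>i\<in>set R. (f i + real n * T / D) * (v i / S))"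
    using assms Tnn Suc.prems(2) SD
    by (intro sum_ennreal) (auto intro!: mult_nonneg_nonneg add_nonneg_nonneg divide_nonneg_nonneg simp: less_imp_le order.strict_trans2)
  also have "(\<Sum>i\<in>set R. (f i + real n * T / D) * (v i / S)) = T / S + real n * T / D * (S / S)"
    unfolding T_def S_def by (rule sum_aux_eq)
  also have "\<dots> \<le> real (Suc n) * T / D"
  proof -
    have "S > 0" using SD \<open>D > 0\<close> by simp
    then have "T / S \<le> T / D" using SD \<open>D > 0\<close> Tnn by (intro divide_left_mono) auto
    then show ?thesis using \<open>S > 0\<close> by (simp add: algebra_simps add_divide_distrib)
  qed
  finally show ?case unfolding T_def by (simp add: ennreal_leI)
qed

lemma iid_sample_bound:
  fixes v f :: "nat \<Rightarrow> real" and D :: real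
  assumes "D > 0" and "\<And>i. f i \<ge> 0"
  assumes "distinct R" "\<forall>i\<in>set R. v i > 0" "D \<le> (\<Sum>j\<in>set R. v j)"
  shows "(\<integral>\<^sup>+ks. ennreal (\<Sum>k\<leftarrow>ks. f k) \<partial>measure_pmf (iid_sample v n R))
      \<le> ennreal (real n * (\<Sum>i\<in>set R. f i * v i) / D)"
proof (induction n)
  case 0
  then show ?case by simp
next
  case (Suc n)
  define T where "T = (\<Sum>i\<in>set R. f i * v i)"
  define S where "S = (\<Sum>j\<in>set R. v j)"
  have SD: "D \<le> S" unfolding S_def using assms by simp
  have Rne: "R \<noteq> []" using SD \<open>D > 0\<close> unfolding S_def by auto
  have Tnn: "T \<ge> 0" unfolding T_def using assms
    by (intro sum_nonneg) (auto intro: mult_nonneg_nonneg less_imp_le)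
  have IH: "(\<integral>\<^sup>+ks. ennreal (\<Sum>k\<leftarrow>ks. f k) \<partial>measure_pmf (iid_sample v n R)) \<le> ennreal (real n * T / D)"
    using Suc.IH unfolding T_def .
  have "(\<integral>\<^sup>+ks. ennreal (\<Sum>k\<leftarrow>ks. f k) \<partial>measure_pmf (iid_sample v (Suc n) R))
     = (\<integral>\<^sup>+i. (\<integral>\<^sup>+ks. ennreal (f i + (\<Sum>k\<leftarrow>ks. f k)) \<partial>measure_pmf (iid_sample v n R))
          \<partial>measure_pmf (weighted_draw v R))"
    by simp
  also have "\<dots> = (\<integral>\<^sup>+i. ennreal (f i) + (\<integral>\<^sup>+ks. ennreal (\<Sum>k\<leftarrow>ks. f k) \<partial>measure_pmf (iid_sample v n R))
          \<partial>measure_pmf (weighted_draw v R))"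
  proof (intro nn_integral_cong)
    fix i
    have "(\<integral>\<^sup>+ks. ennreal (f i + (\<Sum>k\<leftarrow>ks. f k)) \<partial>measure_pmf (iid_sample v n R))
       = (\<integral>\<^sup>+ks. ennreal (f i) + ennreal (\<Sum>k\<leftarrow>ks. f k) \<partial>measure_pmf (iid_sample v n R))"
      using assms(2) by (intro nn_integral_cong ennreal_plus) (auto intro!: sum_list_nonneg)
    also have "\<dots> = ennreal (f i) + (\<integral>\<^sup>+ks. ennreal (\<Sum>k\<leftarrow>ks. f k) \<partial>measure_pmf (iid_sample v n R))"
      by (subst nn_integral_add) (auto simp: measure_pmf.emeasure_space_1)
    finally show "(\<integral>\<^sup>+ks. ennreal (f i + (\<Sum>k\<leftarrow>ks. f k)) \<partial>measure_pmf (iid_sample v n R)) = \<dots>" .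
  qed
  also have "\<dots> = (\<Sum>i\<in>set R. (ennreal (f i) + (\<integral>\<^sup>+ks. ennreal (\<Sum>k\<leftarrow>ks. f k) \<partial>measure_pmf (iid_sample v n R))) * ennreal (v i / S))"
    unfolding S_def by (rule weighted_draw_nn_integral[OF assms(3) _ Rne]) (use assms(4) in auto)
  also have "\<dots> \<le> (\<Sum>i\<in>set R. ennreal ((f i + real n * T / D) * (v i / S)))"
  proof (intro sum_mono)
    fix i assume i: "i \<in> set R"
    have "(ennreal (f i) + (\<integral>\<^sup>+ks. ennreal (\<Sum>k\<leftarrow>ks. f k) \<partial>measure_pmf (iid_sample v n R))) * ennreal (v i / S)
       \<le> (ennreal (f i) + ennreal (real n * T / D)) * ennreal (v i / S)"
      by (intro mult_right_mono add_left_mono IH) auto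
    also have "\<dots> = ennreal (f i + real n * T / D) * ennreal (v i / S)"
      using assms Tnn by (subst ennreal_plus) (auto intro!: divide_nonneg_pos mult_nonneg_nonneg)
    also have "\<dots> = ennreal ((f i + real n * T / D) * (v i / S))"
      using assms Tnn i assms(4) SD by (intro ennreal_mult[symmetric]) (auto intro!: add_nonneg_nonneg divide_nonneg_pos mult_nonneg_nonneg less_imp_le)
    finally show "(ennreal (f i) + (\<integral>\<^sup>+ks. ennreal (\<Sum>k\<leftarrow>ks. f k) \<partial>measure_pmf (iid_sample v n R))) * ennreal (v i / S) \<le> \<dots>" .
  qed
  also have "\<dots> = ennreal (\<Sum>i\<in>set R. (f i + real n * T / D) * (v i / S))"
    using assms Tnn SD
    by (intro sum_ennreal) (auto intro!: mult_nonneg_nonneg add_nonneg_nonneg divide_nonneg_nonneg simp: less_imp_le order.strict_trans2)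
  also have "(\<Sum>i\<in>set R. (f i + real n * T / D) * (v i / S)) = T / S + real n * T / D * (S / S)"
    unfolding T_def S_def by (rule sum_aux_eq)
  also have "\<dots> \<le> real (Suc n) * T / D"
  proof -
    have "S > 0" using SD \<open>D > 0\<close> by simp
    then have "T / S \<le> T / D" using SD \<open>D > 0\<close> Tnn by (intro divide_left_mono) auto
    then show ?thesis using \<open>S > 0\<close> by (simp add: algebra_simps add_divide_distrib)
  qed
  finally show ?case unfolding T_def by (simp add: ennreal_leI)
qed



abbreviation E1 :: "real measure" where
  "E1 \<equiv> density lborel (\<lambda>x. ennreal (exponential_density 1 x))"

lemma sets_E1[simp, measurable_cong]: "sets E1 = sets borel" by simp

lemma prob_E1: "prob_space E1"
  using prob_space_exponential_density[of 1] by simp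

lemma prob_Xi: "prob_space Xi_space"
  unfolding Xi_space_def by (intro prob_space_PiM prob_E1)

interpretation Xi: prob_space Xi_space by (rule prob_Xi)
interpretation XiP: product_prob_space "\<lambda>_. E1" UNIV
  by (simp add: product_prob_space_def product_prob_space_axioms_def prob_E1 product_sigma_finite_def
     prob_space_imp_sigma_finite)

lemma space_Xi: "space Xi_space = UNIV"
  by (simp add: Xi_space_def space_PiM)

lemma sets_Xi: "sets Xi_space = sets (PiM UNIV (\<lambda>_. E1))"
  by (simp add: Xi_space_def)

lemma meas_coord[measurable]: "(\<lambda>e. e k) \<in> borel_measurable Xi_space"
  unfolding Xi_space_def by measurable

lemma distr_coord: "distr Xi_space borel (\<lambda>e. e k) = E1"
proof -
  have "distr Xi_space borel (\<lambda>e. e k) = distr Xi_space E1 (\<lambda>e. e k)"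
    by (intro distr_cong) auto
  also have "\<dots> = E1" unfolding Xi_space_def by (rule XiP.PiM_component) simp
  finally show ?thesis .
qed

lemma indep_coords: "Xi.indep_vars (\<lambda>_. borel) (\<lambda>k e. e k) UNIV"
proof (subst Xi.indep_vars_iff_distr_eq_PiM)
  show "distr Xi_space (Pi\<^sub>M UNIV (\<lambda>_. borel)) (\<lambda>x. \<lambda>i\<in>UNIV. x i) =
        Pi\<^sub>M UNIV (\<lambda>i. distr Xi_space borel (\<lambda>e. e i))"
  proof -
    have "(\<lambda>x. \<lambda>i\<in>UNIV. x i) = (\<lambda>x::nat\<Rightarrow>real. x)" by (simp add: fun_eq_iff)
    then have "distr Xi_space (Pi\<^sub>M UNIV (\<lambda>_. borel)) (\<lambda>x. \<lambda>i\<in>UNIV. x i) = distr Xi_space Xi_space (\<lambda>x. x)"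
    proof -
      have s: "sets (Pi\<^sub>M UNIV (\<lambda>_. borel)) = sets Xi_space"
        unfolding sets_Xi by (intro sets_PiM_cong) auto
      show ?thesis unfolding \<open>(\<lambda>x. \<lambda>i\<in>UNIV. x i) = (\<lambda>x. x)\<close>
        by (intro distr_cong s) auto
    qed
    also have "\<dots> = Xi_space" by (rule distr_id)
    also have "\<dots> = Pi\<^sub>M UNIV (\<lambda>i. distr Xi_space borel (\<lambda>e. e i))"
      by (simp only: distr_coord) (simp add: Xi_space_def)
    finally show ?thesis .
  qed
qed auto

lemma distributed_coord: "distributed Xi_space lborel (\<lambda>e. e k) (\<lambda>x. ennreal (exponential_density 1 x))"
  unfolding distributed_def
proof (intro conjI)
  show "distr Xi_space lborel (\<lambda>e. e k) = E1"
    using distr_coord by (metis distr_cong sets_lborel)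
qed auto

lemma AE_pos: "AE e in Xi_space. \<forall>k. e k > 0"
proof (subst AE_all_countable, intro allI)
  fix k
  have "AE x in E1. x > 0"
  proof (subst AE_density)
    show "AE x in lborel. 0 < ennreal (exponential_density 1 x) \<longrightarrow> 0 < x"
      using AE_lborel_singleton[of 0]
      by eventually_elim (auto simp: exponential_density_def)
  qed auto
  then show "AE e in Xi_space. e k > 0"
    unfolding Xi_space_def by (intro XiP.AE_component) auto
qed

definition G :: "(nat \<Rightarrow> real) \<Rightarrow> nat \<Rightarrow> real" where
  "G e i = (\<Sum>j<i. e j)"

lemma meas_G[measurable]: "(\<lambda>e. G e i) \<in> borel_measurable Xi_space"
  unfolding G_def by measurable

lemma distributed_G:
  assumes "i \<ge> 1"
  shows "distributed Xi_space lborel (\<lambda>e. G e i) (\<lambda>x. ennreal (erlang_density (i - 1) 1 x))"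
proof -
  have "distributed Xi_space lborel (\<lambda>e. \<Sum>j\<in>{..<i}. e j) (erlang_density (card {..<i} - 1) 1)"
    by (rule Xi.exponential_distributed_sum[where X="\<lambda>k e. e k"])
       (use assms distributed_coord in \<open>auto intro: Xi.indep_vars_subset[OF indep_coords] simp: lessThan_empty_iff\<close>)
  then show ?thesis unfolding G_def by simp
qed

lemma indep_prod:
  fixes g :: "nat \<Rightarrow> real \<Rightarrow> ennreal"
  assumes [measurable]: "\<And>k. g k \<in> borel_measurable borel"
  shows "(\<integral>\<^sup>+e. (\<Prod>k<n. g k (e k)) \<partial>Xi_space) = (\<Prod>k<n. \<integral>\<^sup>+x. g k x \<partial>E1)"
proof -
  have "(\<integral>\<^sup>+e. (\<Prod>k<n. g k (e k)) \<partial>Xi_space) = (\<Prod>k<n. \<integral>\<^sup>+e. g k (e k) \<partial>Xi_space)"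
    by (rule Xi.indep_vars_nn_integral)
       (auto intro!: Xi.indep_vars_compose2[OF Xi.indep_vars_subset[OF indep_coords]])
  also have "\<dots> = (\<Prod>k<n. \<integral>\<^sup>+x. g k x \<partial>E1)"
  proof (intro prod.cong refl)
    fix k
    have "(\<integral>\<^sup>+e. g k (e k) \<partial>Xi_space) = (\<integral>\<^sup>+x. g k x \<partial>distr Xi_space borel (\<lambda>e. e k))"
      by (subst nn_integral_distr) auto
    then show "(\<integral>\<^sup>+e. g k (e k) \<partial>Xi_space) = (\<integral>\<^sup>+x. g k x \<partial>E1)" by (simp add: distr_coord)
  qed
  finally show ?thesis .
qed



lemma nn_integral_powr_0c:
  assumes "0 < p" "p < 1" "c \<ge> 0"
  shows "(\<integral>\<^sup>+x. ennreal (indicator {0..c} x * x powr (-p)) \<partial>lborel) = ennreal (c powr (1-p) / (1-p))"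
proof -
  have "((\<lambda>x. x powr (-p)) has_integral (c powr (-p+1) / (-p+1))) {0..c}"
    by (rule has_integral_powr_from_0) (use assms in auto)
  then have "integral\<^sup>N lborel (\<lambda>x. indicator {0..c} x * x powr (-p)) = c powr (-p+1) / (-p+1)"
    by (intro nn_integral_has_integral_lebesgue) auto
  then show ?thesis by simp
qed

lemma nn_integral_E1: "f \<in> borel_measurable borel \<Longrightarrow> (\<integral>\<^sup>+x. f x \<partial>E1) = (\<integral>\<^sup>+x. ennreal (exponential_density 1 x) * f x \<partial>lborel)"
  by (subst nn_integral_density) auto

lemma exp_density_eq:
  assumes "u < 1"
  shows "exponential_density 1 x * exp (u * x) = exponential_density (1 - u) x / (1 - u)"
  using assms by (auto simp: exponential_density_def field_simps simp flip: exp_add)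

lemma nn_integral_exp_density:
  assumes "0 < l" shows "(\<integral>\<^sup>+x. ennreal (exponential_density l x) \<partial>lborel) = 1"
proof -
  interpret prob_space "density lborel (exponential_density l)"
    by (rule prob_space_exponential_density[OF assms])
  have "emeasure (density lborel (exponential_density l)) UNIV = 1"
    using emeasure_space_1 by simp
  then show ?thesis by (simp add: emeasure_density)
qed

lemma mgf_E1:
  assumes "u < 1"
  shows "(\<integral>\<^sup>+x. ennreal (exp (u * x)) \<partial>E1) = ennreal (1 / (1 - u))"
proof -
  have "(\<integral>\<^sup>+x. ennreal (exp (u * x)) \<partial>E1) = (\<integral>\<^sup>+x. ennreal (1 / (1 - u)) * ennreal (exponential_density (1 - u) x) \<partial>lborel)"
    apply (subst nn_integral_E1, simp)
  proof (intro nn_integral_cong)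
    fix x :: real
    have "ennreal (exponential_density 1 x) * ennreal (exp (u * x)) = ennreal (exponential_density 1 x * exp (u * x))"
      by (simp add: ennreal_mult)
    also have "\<dots> = ennreal (1 / (1 - u) * exponential_density (1 - u) x)"
      using exp_density_eq[OF assms] by simp
    also have "\<dots> = ennreal (1 / (1 - u)) * ennreal (exponential_density (1 - u) x)"
      using assms by (intro ennreal_mult) auto
    finally show "ennreal (exponential_density 1 x) * ennreal (exp (u * x)) = \<dots>" .
  qed
  also have "\<dots> = ennreal (1 / (1 - u))"
    using assms by (subst nn_integral_cmult) (auto simp: nn_integral_exp_density)
  finally show ?thesis .
qed

lemma mgf0_E1:
  assumes "0 \<le> u" "u < 1" "0 < p" "p < 1"
  shows "(\<integral>\<^sup>+x. ennreal (x powr (-p) * exp (u * x)) \<partial>E1) \<le> ennreal (1 / (1 - p) + 1 / (1 - u))"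
proof -
  have "(\<integral>\<^sup>+x. ennreal (x powr (-p) * exp (u * x)) \<partial>E1)
      \<le> (\<integral>\<^sup>+x. ennreal (indicator {0..1} x * x powr (-p)) + ennreal (1 / (1 - u)) * ennreal (exponential_density (1 - u) x) \<partial>lborel)"
    apply (subst nn_integral_E1, simp)
  proof (intro nn_integral_mono)
    fix x :: real
    show "ennreal (exponential_density 1 x) * ennreal (x powr (-p) * exp (u * x))
      \<le> ennreal (indicator {0..1} x * x powr (-p)) + ennreal (1 / (1 - u)) * ennreal (exponential_density (1 - u) x)"
    proof (cases "x < 0")
      case True then show ?thesis by (simp add: exponential_density_def)
    next
      case False
      have eq: "exponential_density 1 x * (x powr (-p) * exp (u * x)) = x powr (-p) * (exponential_density (1 - u) x / (1 - u))"
      proof -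
        have "exponential_density 1 x * (x powr (-p) * exp (u * x)) = x powr (-p) * (exponential_density 1 x * exp (u * x))"
          by (simp add: ac_simps)
        then show ?thesis using exp_density_eq[OF assms(2), of x] by simp
      qed
      have "exponential_density 1 x * (x powr (-p) * exp (u * x))
           \<le> indicator {0..1} x * x powr (-p) + 1 / (1 - u) * exponential_density (1 - u) x"
      proof (cases "x \<le> 1")
        case True
        have "exponential_density 1 x * exp (u * x) \<le> 1"
          using False True assms mult_right_mono[of u 1 x] by (auto simp: exponential_density_def simp flip: exp_add)
        then have "exponential_density 1 x * (x powr (-p) * exp (u * x)) \<le> x powr (-p)"
          using mult_left_mono[of "exponential_density 1 x * exp (u * x)" 1 "x powr (-p)"]
          by (simp add: algebra_simps)
        moreover have "0 \<le> 1 / (1 - u) * exponential_density (1 - u) x"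
          using assms by (auto simp: exponential_density_def)
        ultimately show ?thesis using False True by (simp add: indicator_def)
      next
        case True': False
        have "x powr (-p) \<le> 1" using True' assms ge_one_powr_ge_zero[of x p] by (simp add: powr_minus inverse_le_1_iff)
        then have "x powr (-p) * (exponential_density (1 - u) x / (1 - u)) \<le> 1 * (exponential_density (1 - u) x / (1 - u))"
          using assms by (intro mult_right_mono) (auto simp: exponential_density_def)
        then show ?thesis unfolding eq using True' by (simp add: indicator_def)
      qed
      then show ?thesis
        using assms False
        by (simp add: ennreal_mult[symmetric] ennreal_plus[symmetric] exponential_density_def del: ennreal_plus)
    qed
  qed
  also have "\<dots> = ennreal (1 powr (1-p) / (1-p)) + ennreal (1 / (1 - u)) * 1"
    using assms by (subst nn_integral_add) (auto simp: nn_integral_powr_0c nn_integral_cmult nn_integral_exp_density)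
  also have "\<dots> = ennreal (1 / (1 - p) + 1 / (1 - u))"
    using assms by (simp add: ennreal_plus)
  finally show ?thesis .
qed

lemma erlang_sum_le1:
  assumes "x \<ge> 0"
  shows "(\<Sum>k<M. erlang_density k 1 x) \<le> 1"
proof (cases M)
  case 0 then show ?thesis by simp
next
  case (Suc m)
  have "0 \<le> erlang_CDF m 1 x" by (rule erlang_CDF_nonneg) simp
  then have "(\<Sum>n\<le>m. x ^ n * exp (- x) / fact n) \<le> 1"
    using assms by (simp add: erlang_CDF_def)
  moreover have "(\<Sum>k<M. erlang_density k 1 x) = (\<Sum>n\<le>m. x ^ n * exp (- x) / fact n)"
    unfolding Suc lessThan_Suc_atMost using assms by (intro sum.cong) (auto simp: erlang_density_def)
  ultimately show ?thesis by simp
qed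

lemma campbell:
  fixes \<phi> :: "real \<Rightarrow> real"
  assumes [measurable]: "\<phi> \<in> borel_measurable borel"
  assumes nn: "\<And>x. 0 \<le> \<phi> x" and bnd: "\<And>x. x \<ge> 0 \<Longrightarrow> \<phi> x \<le> indicator {0..L} x * x powr (-p)"
  assumes "0 < p" "p < 1" "L \<ge> 0"
  shows "(\<Sum>i\<in>{1..M}. \<integral>\<^sup>+e. ennreal (\<phi> (G e i)) \<partial>Xi_space) \<le> ennreal (L powr (1-p) / (1-p))"
proof -
  have "(\<Sum>i\<in>{1..M}. \<integral>\<^sup>+e. ennreal (\<phi> (G e i)) \<partial>Xi_space)
      = (\<Sum>i\<in>{1..M}. \<integral>\<^sup>+x. ennreal (erlang_density (i - 1) 1 x) * ennreal (\<phi> x) \<partial>lborel)"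
    by (intro sum.cong refl, subst distributed_nn_integral[OF distributed_G]) auto
  also have "\<dots> = (\<integral>\<^sup>+x. (\<Sum>i\<in>{1..M}. ennreal (erlang_density (i - 1) 1 x) * ennreal (\<phi> x)) \<partial>lborel)"
    by (rule nn_integral_sum[symmetric]) auto
  also have "\<dots> \<le> (\<integral>\<^sup>+x. ennreal (indicator {0..L} x * x powr (-p)) \<partial>lborel)"
  proof (intro nn_integral_mono)
    fix x :: real
    show "(\<Sum>i\<in>{1..M}. ennreal (erlang_density (i - 1) 1 x) * ennreal (\<phi> x)) \<le> ennreal (indicator {0..L} x * x powr (-p))"
    proof (cases "x < 0")
      case True then show ?thesis by (simp add: erlang_density_def)
    next
      case False
      have eq1: "(\<Sum>i\<in>{1..M}. ennreal (erlang_density (i - 1) 1 x) * ennreal (\<phi> x))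
          = ennreal ((\<Sum>i\<in>{1..M}. erlang_density (i - 1) 1 x) * \<phi> x)"
        using nn by (simp add: ennreal_mult[symmetric] sum_ennreal sum_distrib_right)
      have eq2: "(\<Sum>i\<in>{1..M}. erlang_density (i - 1) 1 x) = (\<Sum>k<M. erlang_density k 1 x)"
      proof -
        have "(\<Sum>i\<in>{1..M}. erlang_density (i - 1) 1 x) = (\<Sum>i\<in>Suc ` {..<M}. erlang_density (i - 1) 1 x)"
          by (simp add: image_Suc_lessThan)
        also have "\<dots> = (\<Sum>k<M. erlang_density k 1 x)" by (subst sum.reindex) auto
        finally show ?thesis .
      qed
      have "(\<Sum>k<M. erlang_density k 1 x) * \<phi> x \<le> 1 * \<phi> x"
        using erlang_sum_le1[of x M] False nn by (intro mult_right_mono) auto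
      also have "\<dots> \<le> indicator {0..L} x * x powr (-p)" using bnd False by simp
      finally show ?thesis unfolding eq1 eq2 by (intro ennreal_leI)
    qed
  qed
  also have "\<dots> = ennreal (L powr (1-p) / (1-p))" by (rule nn_integral_powr_0c) (use assms in auto)
  finally show ?thesis .
qed



lemma sum_antitone_tail:
  fixes v :: "nat \<Rightarrow> real"
  assumes anti: "\<And>i j. 1 \<le> i \<Longrightarrow> i \<le> j \<Longrightarrow> j \<le> M \<Longrightarrow> v j \<le> v i"
    and nn: "\<And>i. v i \<ge> 0" and N: "N \<ge> 1" and NM: "N \<le> M"
    and S: "S \<subseteq> {1..M}" and c: "card {N..M} \<le> card S"
  shows "(\<Sum>j\<in>{N..M}. v j) \<le> (\<Sum>j\<in>S. v j)"
proof -
  define A where "A = {N..M}"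
  have fS: "finite S" using S finite_subset by blast
  have fA: "finite A" unfolding A_def by simp
  have cA: "card A = card (A \<inter> S) + card (A - S)"
    using fA by (metis Diff_Diff_Int card_Diff_subset_Int Int_lower1 card_mono finite_Int le_add_diff_inverse
      Int_commute add.commute card_Int_Diff fS)
  have cS: "card S = card (A \<inter> S) + card (S - A)"
    using fS by (metis Int_commute card_Int_Diff fA)
  have cc: "card (A - S) \<le> card (S - A)" using c cA cS unfolding A_def by simp
  have sA: "(\<Sum>j\<in>A. v j) = (\<Sum>j\<in>A \<inter> S. v j) + (\<Sum>j\<in>A - S. v j)"
    using fA by (metis sum.Int_Diff)
  have sS: "(\<Sum>j\<in>S. v j) = (\<Sum>j\<in>A \<inter> S. v j) + (\<Sum>j\<in>S - A. v j)"
    using fS by (metis Int_commute sum.Int_Diff)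
  have "(\<Sum>j\<in>A - S. v j) \<le> (\<Sum>j\<in>A - S. v N)"
    by (intro sum_mono anti) (use N in \<open>auto simp: A_def\<close>)
  also have "\<dots> = card (A - S) * v N" by simp
  also have "\<dots> \<le> card (S - A) * v N" using cc nn by (intro mult_right_mono) auto
  also have "\<dots> = (\<Sum>j\<in>S - A. v N)" by simp
  also have "\<dots> \<le> (\<Sum>j\<in>S - A. v j)"
  proof (intro sum_mono)
    fix j assume j: "j \<in> S - A"
    then have "j < N \<or> j > M" unfolding A_def by auto
    with j S have "j < N" "1 \<le> j" by auto
    show "v N \<le> v j" using \<open>j < N\<close> \<open>1 \<le> j\<close> NM by (intro anti) auto
  qed
  finally show ?thesis unfolding A_def[symmetric] using sA sS by simp
qed

lemma pp_atom_G: "pp_atom e i = 1 / G e i"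
  by (simp add: pp_atom_def G_def)

lemma G_mono: "(\<forall>k. e k > 0) \<Longrightarrow> i \<le> j \<Longrightarrow> G e i \<le> G e j"
  unfolding G_def by (intro sum_mono2) (auto intro: less_imp_le)

lemma G_pos: "(\<forall>k. e k > 0) \<Longrightarrow> 1 \<le> i \<Longrightarrow> G e i > 0"
  unfolding G_def by (intro sum_pos) (auto simp: lessThan_empty_iff)

lemma G_1: "G e 1 = e 0" by (simp add: G_def)

lemma set_index_range: "set (index_range \<gamma> N) = {1..nat \<lceil>real N powr \<gamma>\<rceil>}"
  by (auto simp: index_range_def)

lemma distinct_index_range: "distinct (index_range \<gamma> N)"
  by (simp add: index_range_def)

lemma length_index_range: "length (index_range \<gamma> N) = nat \<lceil>real N powr \<gamma>\<rceil>"
  unfolding index_range_def length_upt by simp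

lemma bridge:
  fixes F :: "real \<Rightarrow> real"
  assumes pos: "\<forall>k. e k > 0" and N: "N \<ge> 1" and MN: "N \<le> nat \<lceil>real N powr \<gamma>\<rceil>"
    and Fnn: "\<And>x. F x \<ge> 0" and \<beta>: "\<beta> > 0"
  defines "M \<equiv> nat \<lceil>real N powr \<gamma>\<rceil>"
  defines "D \<equiv> (\<Sum>j\<in>{N..M}. pp_atom e j powr \<beta>)"
  shows "(\<integral>\<^sup>+ks. ennreal (\<Sum>k\<leftarrow>ks. F (pp_atom e k)) \<partial>measure_pmf (I_sample \<gamma> \<beta> N e))
           \<le> ennreal (real N * (\<Sum>i\<in>{1..M}. F (pp_atom e i) * pp_atom e i powr \<beta>) / D)"
    and "(\<integral>\<^sup>+ks. ennreal (\<Sum>k\<leftarrow>ks. F (pp_atom e k)) \<partial>measure_pmf (J_sample \<gamma> \<beta> N e))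
           \<le> ennreal (real N * (\<Sum>i\<in>{1..M}. F (pp_atom e i) * pp_atom e i powr \<beta>) / D)"
proof -
  define v where "v i = pp_atom e i powr \<beta>" for i
  have vpos: "v i > 0" if "i \<ge> 1" for i
    using G_pos[OF pos that] by (simp add: v_def pp_atom_G)
  have vnn: "v i \<ge> 0" for i by (simp add: v_def)
  have anti: "v j \<le> v i" if "1 \<le> i" "i \<le> j" "j \<le> M" for i j
  proof -
    have "G e i \<le> G e j" by (rule G_mono[OF pos \<open>i \<le> j\<close>])
    moreover have "G e i > 0" by (rule G_pos[OF pos \<open>1 \<le> i\<close>])
    ultimately have "1 / G e j \<le> 1 / G e i" by (intro divide_left_mono) auto
    then show ?thesis unfolding v_def pp_atom_G using \<beta> \<open>G e i > 0\<close> \<open>G e i \<le> G e j\<close>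
      by (intro powr_mono2) auto
  qed
  have Dpos: "D > 0" unfolding D_def v_def[symmetric]
    using MN N vpos unfolding M_def by (intro sum_pos) auto
  have DR: "D \<le> (\<Sum>j\<in>set (index_range \<gamma> N). v j)"
    unfolding D_def v_def[symmetric] set_index_range M_def[symmetric]
    using N vnn by (intro sum_mono2) auto
  have Rpos: "\<forall>i\<in>set (index_range \<gamma> N). v i > 0"
    using vpos by (auto simp: set_index_range)
  show "(\<integral>\<^sup>+ks. ennreal (\<Sum>k\<leftarrow>ks. F (pp_atom e k)) \<partial>measure_pmf (I_sample \<gamma> \<beta> N e))
           \<le> ennreal (real N * (\<Sum>i\<in>{1..M}. F (pp_atom e i) * pp_atom e i powr \<beta>) / D)"
  proof -
    have "(\<integral>\<^sup>+ks. ennreal (\<Sum>k\<leftarrow>ks. (\<lambda>k. F (pp_atom e k)) k) \<partial>measure_pmf (succ_sample v N (index_range \<gamma> N)))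
       \<le> ennreal (real N * (\<Sum>i\<in>set (index_range \<gamma> N). F (pp_atom e i) * v i) / D)"
    proof (rule succ_sample_bound[OF Dpos Fnn distinct_index_range Rpos], intro allI impI)
      fix S assume S: "S \<subseteq> set (index_range \<gamma> N)" "length (index_range \<gamma> N) + 1 \<le> card S + N"
      have "D \<le> (\<Sum>j\<in>S. v j)" unfolding D_def v_def[symmetric]
      proof (rule sum_antitone_tail[OF anti vnn N MN[folded M_def]])
        show "S \<subseteq> {1..M}" using S by (simp add: set_index_range M_def)
        show "card {N..M} \<le> card S" using S by (simp add: length_index_range M_def)
      qed auto
      then show "D \<le> sum v S" by simp
    qed
    then show ?thesis
      by (simp add: I_sample_def v_def[abs_def] set_index_range M_def)
  qed
  show "(\<integral>\<^sup>+ks. ennreal (\<Sum>k\<leftarrow>ks. F (pp_atom e k)) \<partial>measure_pmf (J_sample \<gamma> \<beta> N e))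
           \<le> ennreal (real N * (\<Sum>i\<in>{1..M}. F (pp_atom e i) * pp_atom e i powr \<beta>) / D)"
  proof -
    have "(\<integral>\<^sup>+ks. ennreal (\<Sum>k\<leftarrow>ks. (\<lambda>k. F (pp_atom e k)) k) \<partial>measure_pmf (iid_sample v N (index_range \<gamma> N)))
       \<le> ennreal (real N * (\<Sum>i\<in>set (index_range \<gamma> N). F (pp_atom e i) * v i) / D)"
      by (rule iid_sample_bound[OF Dpos Fnn distinct_index_range Rpos DR])
    then show ?thesis
      by (simp add: J_sample_def v_def[abs_def] set_index_range M_def)
  qed
qed



lemma powr_le_max1: "x > 0 \<Longrightarrow> 0 < \<beta> \<Longrightarrow> \<beta> < 1 \<Longrightarrow> x powr \<beta> \<le> max 1 (x::real)"
proof (cases "x \<le> 1")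
  case True
  assume "x > 0" "0 < \<beta>" "\<beta> < 1"
  then have "x powr \<beta> \<le> 1" using True by (intro powr_le1) auto
  then show ?thesis by simp
next
  case False
  assume "x > 0" "0 < \<beta>" "\<beta> < 1"
  then have "x powr \<beta> \<le> x powr 1" using False by (intro powr_mono) auto
  then show ?thesis using False by simp
qed

lemma max1_le_exp: "x \<ge> 0 \<Longrightarrow> 0 < s \<Longrightarrow> s \<le> 1 \<Longrightarrow> max 1 x \<le> exp (s * x) / (s::real)"
proof -
  assume x: "x \<ge> 0" and s: "0 < s" "s \<le> 1"
  have e1: "1 \<le> exp (s * x)" using x s by simp
  have "1 \<le> 1 / s" using s by simp
  also have "\<dots> \<le> exp (s * x) / s" using e1 s by (intro divide_right_mono) auto
  finally have 1: "1 \<le> exp (s * x) / s" .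
  have "s * x \<le> exp (s * x)" using exp_ge_add_one_self[of "s * x"] by linarith
  then have 2: "x \<le> exp (s * x) / s" using s by (simp add: field_simps)
  show ?thesis using 1 2 by simp
qed

lemma inv_powr: "x > 0 \<Longrightarrow> (1 / x) powr c = x powr (- c)" for x :: real
  by (simp add: powr_minus_divide powr_divide)

lemma key_pointwise:
  fixes F :: "real \<Rightarrow> real" and e :: "nat \<Rightarrow> real"
  assumes pos: "\<forall>k. e k > 0" and N: "N \<ge> 1" and NM: "N \<le> M"
    and \<beta>: "0 < \<beta>" "\<beta> < 1" and a: "a > 0" and p: "p = a + \<beta>"
    and \<delta>: "\<delta> > 0" and t: "t > 0" and s: "0 < s" "s \<le> 1" and u: "u = s + t"
    and Fnn: "\<And>x. F x \<ge> 0" and Fle: "\<And>x. x \<ge> 0 \<Longrightarrow> F x \<le> x powr a"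
  defines "U \<equiv> (\<Sum>i\<in>{1..M}. F (pp_atom e i) * pp_atom e i powr \<beta>)"
  defines "D \<equiv> (\<Sum>j\<in>{N..M}. pp_atom e j powr \<beta>)"
  defines "S0 \<equiv> (\<Sum>j\<in>{N..M}. real j powr (-\<beta>))"
  shows "U / D \<le> (1 + \<delta>) powr \<beta> / S0 * U
     + real M / s * (\<Sum>j\<in>{N..M}. exp (- t * (1 + \<delta>) * real j) * (e 0 powr (-p) * exp (u * G e j)))"
proof -
  have Gpos: "\<And>i. i \<ge> 1 \<Longrightarrow> G e i > 0" using G_pos[OF pos] by simp
  have v_eq: "pp_atom e j powr \<beta> = G e j powr (-\<beta>)" if "j \<ge> 1" for j
    using Gpos[OF that] by (simp add: pp_atom_G inv_powr)
  have Unn: "U \<ge> 0" unfolding U_def using Fnn by (intro sum_nonneg mult_nonneg_nonneg) auto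
  have Dpos: "D > 0" unfolding D_def using NM N Gpos
    by (intro sum_pos) (auto simp: pp_atom_G, metis Gpos order.trans less_irrefl)
  have S0pos: "S0 > 0" unfolding S0_def using NM N by (intro sum_pos) auto
  define B where "B = real M / s * (\<Sum>j\<in>{N..M}. exp (- t * (1 + \<delta>) * real j) * (e 0 powr (-p) * exp (u * G e j)))"
  have Bnn: "B \<ge> 0" unfolding B_def using s by (intro mult_nonneg_nonneg sum_nonneg) auto
  show ?thesis
  proof (cases "\<forall>j\<in>{N..M}. G e j \<le> (1 + \<delta>) * real j")
    case True
    have "(1 + \<delta>) powr (-\<beta>) * S0 = (\<Sum>j\<in>{N..M}. ((1 + \<delta>) * real j) powr (-\<beta>))"
      unfolding S0_def sum_distrib_left using \<delta> by (intro sum.cong) (auto simp: powr_mult)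
    also have "\<dots> \<le> D" unfolding D_def
    proof (intro sum_mono)
      fix j assume j: "j \<in> {N..M}"
      then have j1: "j \<ge> 1" using N by auto
      have "((1 + \<delta>) * real j) powr (-\<beta>) \<le> G e j powr (-\<beta>)"
        using True j Gpos[OF j1] \<beta> by (intro powr_mono2') auto
      then show "((1 + \<delta>) * real j) powr (-\<beta>) \<le> pp_atom e j powr \<beta>" using v_eq[OF j1] by simp
    qed
    finally have DL: "(1 + \<delta>) powr (-\<beta>) * S0 \<le> D" .
    have pp: "(1 + \<delta>) powr (-\<beta>) * S0 > 0" using S0pos \<delta> by simp
    have "U / D \<le> U / ((1 + \<delta>) powr (-\<beta>) * S0)"
      using DL pp Unn by (intro divide_left_mono) auto
    also have "\<dots> = (1 + \<delta>) powr \<beta> / S0 * U"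
      using \<delta> S0pos by (simp add: powr_minus field_simps)
    finally have "U / D \<le> (1 + \<delta>) powr \<beta> / S0 * U" .
    with Bnn show ?thesis unfolding B_def by linarith
  next
    case False
    then obtain j0 where j0: "j0 \<in> {N..M}" "G e j0 > (1 + \<delta>) * real j0" by auto
    have j01: "j0 \<ge> 1" using j0 N by auto
    have e0: "e 0 > 0" using pos by simp
    have "G e N powr (-\<beta>) \<le> D" unfolding D_def
    proof -
      have "pp_atom e N powr \<beta> \<le> (\<Sum>j\<in>{N..M}. pp_atom e j powr \<beta>)"
        by (rule member_le_sum) (use NM in auto)
      then show "G e N powr (-\<beta>) \<le> (\<Sum>j\<in>{N..M}. pp_atom e j powr \<beta>)" using v_eq[OF N] by simp
    qed
    moreover have "G e N powr (-\<beta>) > 0" using Gpos[OF N] by simp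
    ultimately have "U / D \<le> U / G e N powr (-\<beta>)" using Unn Dpos by (intro divide_left_mono) (auto intro!: mult_pos_pos)
    also have "\<dots> = U * G e N powr \<beta>" using Gpos[OF N] by (simp add: powr_minus divide_inverse)
    also have "\<dots> \<le> (real M * e 0 powr (-p)) * G e N powr \<beta>"
    proof (intro mult_right_mono)
      have "U \<le> (\<Sum>i\<in>{1..M}. e 0 powr (-p))" unfolding U_def
      proof (intro sum_mono)
        fix i assume i: "i \<in> {1..M}"
        then have i1: "i \<ge> 1" by simp
        have g: "G e i > 0" using Gpos[OF i1] .
        have "F (pp_atom e i) * pp_atom e i powr \<beta> \<le> pp_atom e i powr a * pp_atom e i powr \<beta>"
          using g Fle[of "pp_atom e i"] by (intro mult_right_mono) (auto simp: pp_atom_G)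
        also have "\<dots> = G e i powr (-p)"
          using g by (simp add: pp_atom_G inv_powr p powr_add[symmetric])
        also have "\<dots> \<le> e 0 powr (-p)"
          using G_mono[OF pos i1] e0 a \<beta> p G_1[of e] by (intro powr_mono2') auto
        finally show "F (pp_atom e i) * pp_atom e i powr \<beta> \<le> e 0 powr (-p)" .
      qed
      then show "U \<le> real M * e 0 powr (-p)" by simp
    qed auto
    also have "\<dots> \<le> (real M * e 0 powr (-p)) * (exp (s * G e j0) / s * exp (t * (G e j0 - (1 + \<delta>) * real j0)))"
    proof (intro mult_left_mono)
      have "G e N powr \<beta> \<le> G e j0 powr \<beta>"
        using G_mono[OF pos, of N j0] j0 Gpos[OF N] \<beta> by (intro powr_mono2) auto
      also have "\<dots> \<le> max 1 (G e j0)" using powr_le_max1[OF Gpos[OF j01] \<beta>] .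
      also have "\<dots> \<le> exp (s * G e j0) / s" using max1_le_exp[of "G e j0" s] Gpos[OF j01] s by simp
      also have "\<dots> \<le> exp (s * G e j0) / s * exp (t * (G e j0 - (1 + \<delta>) * real j0))"
      proof -
        have "1 \<le> exp (t * (G e j0 - (1 + \<delta>) * real j0))" using j0 t by simp
        moreover have "exp (s * G e j0) / s \<ge> 0" using s by simp
        ultimately show ?thesis using mult_left_mono[of 1 "exp (t * (G e j0 - (1 + \<delta>) * real j0))" "exp (s * G e j0) / s"] by simp
      qed
      finally show "G e N powr \<beta> \<le> exp (s * G e j0) / s * exp (t * (G e j0 - (1 + \<delta>) * real j0))" .
    qed simp
    also have "\<dots> = real M / s * (exp (- t * (1 + \<delta>) * real j0) * (e 0 powr (-p) * exp (u * G e j0)))"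
      using s by (simp add: u field_simps flip: exp_add)
    also have "\<dots> \<le> B" unfolding B_def
    proof (intro mult_left_mono)
      show "exp (- t * (1 + \<delta>) * real j0) * (e 0 powr - p * exp (u * G e j0))
        \<le> (\<Sum>j\<in>{N..M}. exp (- t * (1 + \<delta>) * real j) * (e 0 powr - p * exp (u * G e j)))"
        using j0 by (intro member_le_sum) auto
    qed (use s in auto)
    finally have "U / D \<le> B" .
    moreover have "0 \<le> (1 + \<delta>) powr \<beta> / S0 * U" using Unn S0pos by simp
    ultimately show ?thesis unfolding B_def by linarith
  qed
qed



lemma mgf_prod:
  assumes "j \<ge> 1" "0 \<le> u" "u < 1" "0 < p" "p < 1"
  shows "(\<integral>\<^sup>+e. ennreal (e 0 powr (-p) * exp (u * G e j)) \<partial>Xi_space)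
     \<le> ennreal ((1 / (1 - p) + 1 / (1 - u)) * (1 / (1 - u)) ^ (j - 1))"
proof -
  obtain j' where j': "j = Suc j'" using assms(1) by (cases j) auto
  define g where "g (k::nat) (x::real) = (if k = 0 then ennreal (x powr (-p) * exp (u * x)) else ennreal (exp (u * x)))" for k x
  have gm[measurable]: "g k \<in> borel_measurable borel" for k unfolding g_def by measurable
  have eq: "ennreal (e 0 powr (-p) * exp (u * G e j)) = (\<Prod>k<j. g k (e k))" for e
  proof -
    have "(\<Prod>k<j. g k (e k)) = g 0 (e 0) * (\<Prod>k<j'. g (Suc k) (e (Suc k)))"
      unfolding j' by (rule prod.lessThan_Suc_shift)
    also have "(\<Prod>k<j'. g (Suc k) (e (Suc k))) = (\<Prod>k<j'. ennreal (exp (u * e (Suc k))))"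
      by (simp add: g_def)
    also have "\<dots> = ennreal (\<Prod>k<j'. exp (u * e (Suc k)))" by (simp add: prod_ennreal)
    also have "(\<Prod>k<j'. exp (u * e (Suc k))) = exp (u * (\<Sum>k<j'. e (Suc k)))"
      by (simp add: exp_sum sum_distrib_left)
    finally have "(\<Prod>k<j. g k (e k)) = ennreal (e 0 powr (-p) * exp (u * e 0)) * ennreal (exp (u * (\<Sum>k<j'. e (Suc k))))"
      by (simp add: g_def)
    also have "\<dots> = ennreal (e 0 powr (-p) * exp (u * e 0) * exp (u * (\<Sum>k<j'. e (Suc k))))"
      by (simp add: ennreal_mult)
    also have "\<dots> = ennreal (e 0 powr (-p) * exp (u * G e j))"
      unfolding G_def j' by (simp add: sum.lessThan_Suc_shift distrib_left exp_add mult.assoc del: sum.lessThan_Suc)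
    finally show ?thesis by simp
  qed
  have "(\<integral>\<^sup>+e. ennreal (e 0 powr (-p) * exp (u * G e j)) \<partial>Xi_space) = (\<integral>\<^sup>+e. (\<Prod>k<j. g k (e k)) \<partial>Xi_space)"
    by (simp add: eq)
  also have "\<dots> = (\<Prod>k<j. \<integral>\<^sup>+x. g k x \<partial>E1)" by (rule indep_prod) simp
  also have "\<dots> = (\<integral>\<^sup>+x. g 0 x \<partial>E1) * (\<Prod>k<j'. \<integral>\<^sup>+x. g (Suc k) x \<partial>E1)"
    unfolding j' by (rule prod.lessThan_Suc_shift)
  also have "(\<Prod>k<j'. \<integral>\<^sup>+x. g (Suc k) x \<partial>E1) = ennreal (1 / (1 - u)) ^ j'"
    using assms by (simp add: g_def mgf_E1)
  also have "(\<integral>\<^sup>+x. g 0 x \<partial>E1) * ennreal (1 / (1 - u)) ^ j' \<le> ennreal (1 / (1 - p) + 1 / (1 - u)) * ennreal (1 / (1 - u)) ^ j'"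
    by (intro mult_right_mono) (use assms mgf0_E1[of u p] in \<open>auto simp: g_def\<close>)
  also have "\<dots> = ennreal ((1 / (1 - p) + 1 / (1 - u)) * (1 / (1 - u)) ^ (j - 1))"
    using assms by (simp add: j' ennreal_mult ennreal_power)
  finally show ?thesis .
qed

lemma phi_bound:
  fixes a \<beta> b p :: real and N :: nat
  assumes "a > 0" "\<beta> > 0" "p = a + \<beta>" "N \<ge> 1" "x \<ge> 0"
  shows "(1 / x) powr a * indicator {real N powr (-b)..} (1 / x) * (1 / x) powr \<beta>
     \<le> indicator {0..real N powr b} x * x powr (-p)"
proof (cases "x = 0")
  case True then show ?thesis by simp
next
  case False
  then have x: "x > 0" using assms by simp
  have "(1 / x) powr a * (1 / x) powr \<beta> = x powr (-p)"
    using x assms by (simp add: inv_powr powr_add[symmetric])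
  moreover have "(1 / x \<in> {real N powr (-b)..}) \<longleftrightarrow> x \<in> {0..real N powr b}"
  proof -
    have Nb: "real N powr b > 0" using assms by simp
    have "real N powr (-b) = 1 / real N powr b" by (simp add: powr_minus_divide)
    then have "(1 / x \<in> {real N powr (-b)..}) \<longleftrightarrow> 1 / real N powr b \<le> 1 / x" by simp
    also have "\<dots> \<longleftrightarrow> x \<le> real N powr b" using x Nb by (simp add: frac_le_eq field_simps)
    finally show ?thesis using x by simp
  qed
  ultimately show ?thesis by (simp add: indicator_def algebra_simps)
qed

lemma ennreal_lin:
  fixes c x :: real and k y :: "nat \<Rightarrow> real"
  assumes "0 \<le> c" "0 \<le> x" "\<forall>j\<in>J. 0 \<le> k j" "\<forall>j\<in>J. 0 \<le> y j"
  shows "ennreal (c * x + (\<Sum>j\<in>J. k j * y j)) = ennreal c * ennreal x + (\<Sum>j\<in>J. ennreal (k j) * ennreal (y j))"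
proof -
  have "ennreal (c * x + (\<Sum>j\<in>J. k j * y j)) = ennreal (c * x) + ennreal (\<Sum>j\<in>J. k j * y j)"
    using assms by (intro ennreal_plus) (auto intro!: sum_nonneg)
  also have "ennreal (c * x) = ennreal c * ennreal x" using assms(1,2) by (rule ennreal_mult)
  also have "ennreal (\<Sum>j\<in>J. k j * y j) = (\<Sum>j\<in>J. ennreal (k j * y j))"
    using assms by (intro sum_ennreal[symmetric]) auto
  also have "\<dots> = (\<Sum>j\<in>J. ennreal (k j) * ennreal (y j))"
    using assms by (intro sum.cong refl ennreal_mult) auto
  finally show ?thesis .
qed

lemma main_bound:
  fixes \<gamma> \<beta> a b p \<delta> t s u :: real and N M :: nat
  assumes \<beta>: "0 < \<beta>" "\<beta> < 1" and a: "a > 0" and p: "p = a + \<beta>" "p < 1" and b: "b \<ge> 0"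
    and N: "N \<ge> 1" and M: "M = nat \<lceil>real N powr \<gamma>\<rceil>" and NM: "N \<le> M"
    and \<delta>: "\<delta> > 0" and t: "t > 0" and s: "0 < s" "s \<le> 1" and u: "u = s + t" "u < 1"
  defines "F \<equiv> \<lambda>x. x powr a * indicator {real N powr (-b)..} x"
  defines "S0 \<equiv> (\<Sum>j\<in>{N..M}. real j powr (-\<beta>))"
  defines "Bnd \<equiv> real N * ((1 + \<delta>) powr \<beta> / S0 * ((real N powr b) powr (1 - p) / (1 - p))
      + real M / s * (\<Sum>j\<in>{N..M}. exp (- t * (1 + \<delta>) * real j) * ((1 / (1 - p) + 1 / (1 - u)) * (1 / (1 - u)) ^ (j - 1))))"
  shows "total_expect (I_sample \<gamma> \<beta> N) F \<le> ennreal Bnd \<and> total_expect (J_sample \<gamma> \<beta> N) F \<le> ennreal Bnd"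
proof -
  define \<phi> where "\<phi> x = (1 / x) powr a * indicator {real N powr (-b)..} (1 / x) * (1 / x) powr \<beta>" for x :: real
  have \<phi>m[measurable]: "\<phi> \<in> borel_measurable borel" unfolding \<phi>_def by measurable
  have \<phi>nn: "\<phi> x \<ge> 0" for x unfolding \<phi>_def by simp
  define U where "U e = (\<Sum>i\<in>{1..M}. \<phi> (G e i))" for e
  define D where "D e = (\<Sum>j\<in>{N..M}. pp_atom e j powr \<beta>)" for e
  define X where "X j e = e 0 powr (-p) * exp (u * G e j)" for j e
  define c1 where "c1 = (1 + \<delta>) powr \<beta> / S0"
  define aj where "aj j = exp (- t * (1 + \<delta>) * real j)" for j :: nat
  have S0pos: "S0 > 0" unfolding S0_def using NM N by (intro sum_pos) auto
  have c1nn: "c1 \<ge> 0" unfolding c1_def using S0pos by simp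
  have Fnn: "F x \<ge> 0" for x unfolding F_def by simp
  have Fle: "F x \<le> x powr a" if "x \<ge> 0" for x unfolding F_def by (simp add: indicator_def)
  have UF: "U e = (\<Sum>i\<in>{1..M}. F (pp_atom e i) * pp_atom e i powr \<beta>)" for e
    unfolding U_def \<phi>_def F_def pp_atom_G by simp
  have Unn: "U e \<ge> 0" for e unfolding U_def using \<phi>nn by (simp add: sum_nonneg)
  have Xnn: "X j e \<ge> 0" for j e unfolding X_def by simp
  have Um[measurable]: "U \<in> borel_measurable Xi_space" unfolding U_def by measurable
  have Xm[measurable]: "X j \<in> borel_measurable Xi_space" for j unfolding X_def by measurable
  define \<Phi> where "\<Phi> e = ennreal (real N * c1) * ennreal (U e)
      + (\<Sum>j\<in>{N..M}. ennreal (real N * real M / s * aj j) * ennreal (X j e))" for e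
  have pw: "ennreal (real N * (U e / D e)) \<le> \<Phi> e" if pos: "\<forall>k. e k > 0" for e
  proof -
    have "U e / D e \<le> c1 * U e + real M / s * (\<Sum>j\<in>{N..M}. aj j * X j e)"
      unfolding UF D_def c1_def aj_def X_def S0_def
      by (rule key_pointwise[OF pos N NM \<beta> a p(1) \<delta> t s u(1) Fnn Fle])
    then have "real N * (U e / D e) \<le> real N * (c1 * U e + real M / s * (\<Sum>j\<in>{N..M}. aj j * X j e))"
      by (rule mult_left_mono) simp
    also have "\<dots> = real N * c1 * U e + (\<Sum>j\<in>{N..M}. real N * real M / s * aj j * X j e)"
      by (simp add: distrib_left sum_distrib_left mult.assoc)
    finally have "real N * (U e / D e) \<le> real N * c1 * U e + (\<Sum>j\<in>{N..M}. real N * real M / s * aj j * X j e)" .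
    then have "ennreal (real N * (U e / D e)) \<le> ennreal (real N * c1 * U e + (\<Sum>j\<in>{N..M}. real N * real M / s * aj j * X j e))"
      by (rule ennreal_leI)
    also have "\<dots> = \<Phi> e"
      unfolding \<Phi>_def using c1nn Unn Xnn s
      by (intro ennreal_lin) (auto simp: aj_def)
    finally show ?thesis .
  qed
  have int\<Phi>: "(\<integral>\<^sup>+e. \<Phi> e \<partial>Xi_space) \<le> ennreal Bnd"
  proof -
    have "(\<integral>\<^sup>+e. \<Phi> e \<partial>Xi_space) = ennreal (real N * c1) * (\<integral>\<^sup>+e. ennreal (U e) \<partial>Xi_space)
        + (\<Sum>j\<in>{N..M}. ennreal (real N * real M / s * aj j) * (\<integral>\<^sup>+e. ennreal (X j e) \<partial>Xi_space))"
      unfolding \<Phi>_def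
      by (subst nn_integral_add) (auto simp: nn_integral_cmult nn_integral_sum)
    also have "(\<integral>\<^sup>+e. ennreal (U e) \<partial>Xi_space) \<le> ennreal ((real N powr b) powr (1 - p) / (1 - p))"
    proof -
      have "(\<integral>\<^sup>+e. ennreal (U e) \<partial>Xi_space) = (\<Sum>i\<in>{1..M}. \<integral>\<^sup>+e. ennreal (\<phi> (G e i)) \<partial>Xi_space)"
      proof -
        have "(\<lambda>e. ennreal (U e)) = (\<lambda>e. \<Sum>i\<in>{1..M}. ennreal (\<phi> (G e i)))"
          unfolding U_def by (simp add: fun_eq_iff sum_ennreal \<phi>nn)
        then show ?thesis by (simp add: nn_integral_sum)
      qed
      also have "\<dots> \<le> ennreal ((real N powr b) powr (1 - p) / (1 - p))"
        by (rule campbell[OF \<phi>m \<phi>nn]) (use phi_bound[OF a \<beta>(1) p(1) N] p a \<beta> in \<open>auto simp: \<phi>_def\<close>)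
      finally show ?thesis .
    qed
    also have "(\<Sum>j\<in>{N..M}. ennreal (real N * real M / s * aj j) * (\<integral>\<^sup>+e. ennreal (X j e) \<partial>Xi_space))
       \<le> (\<Sum>j\<in>{N..M}. ennreal (real N * real M / s * aj j) * ennreal ((1 / (1 - p) + 1 / (1 - u)) * (1 / (1 - u)) ^ (j - 1)))"
    proof (intro sum_mono mult_left_mono)
      fix j assume "j \<in> {N..M}"
      then have "j \<ge> 1" using N by auto
      then show "(\<integral>\<^sup>+e. ennreal (X j e) \<partial>Xi_space) \<le> ennreal ((1 / (1 - p) + 1 / (1 - u)) * (1 / (1 - u)) ^ (j - 1))"
        unfolding X_def by (rule mgf_prod) (use s t u p a \<beta> in auto)
    qed auto
    also have "ennreal (real N * c1) * ennreal ((real N powr b) powr (1 - p) / (1 - p))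
       + (\<Sum>j\<in>{N..M}. ennreal (real N * real M / s * aj j) * ennreal ((1 / (1 - p) + 1 / (1 - u)) * (1 / (1 - u)) ^ (j - 1)))
       = ennreal Bnd"
    proof -
      have C: "(1 / (1 - p) + 1 / (1 - u)) * (1 / (1 - u)) ^ (j - 1) \<ge> 0" for j using p u by simp
      have "ennreal (real N * c1) * ennreal ((real N powr b) powr (1 - p) / (1 - p))
       + (\<Sum>j\<in>{N..M}. ennreal (real N * real M / s * aj j) * ennreal ((1 / (1 - p) + 1 / (1 - u)) * (1 / (1 - u)) ^ (j - 1)))
        = ennreal (real N * c1 * ((real N powr b) powr (1 - p) / (1 - p))
           + (\<Sum>j\<in>{N..M}. real N * real M / s * aj j * ((1 / (1 - p) + 1 / (1 - u)) * (1 / (1 - u)) ^ (j - 1))))"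
        using c1nn p s C by (intro ennreal_lin[symmetric]) (auto simp: aj_def)
      also have "\<dots> = ennreal Bnd"
        unfolding Bnd_def c1_def aj_def by (simp add: distrib_left sum_distrib_left mult.assoc)
      finally show ?thesis .
    qed
    finally show ?thesis by (simp add: add_mono mult_left_mono)
  qed
  have gen: "total_expect samp F \<le> ennreal Bnd"
    if hyp: "\<And>e. \<forall>k. e k > 0 \<Longrightarrow>
       (\<integral>\<^sup>+ks. ennreal (\<Sum>k\<leftarrow>ks. F (pp_atom e k)) \<partial>measure_pmf (samp e)) \<le> ennreal (real N * (U e / D e))" for samp
  proof -
    have "total_expect samp F \<le> (\<integral>\<^sup>+e. \<Phi> e \<partial>Xi_space)"
      unfolding total_expect_def
    proof (rule nn_integral_mono_AE)
      show "AE e in Xi_space. (\<integral>\<^sup>+ks. ennreal (\<Sum>k\<leftarrow>ks. F (pp_atom e k)) \<partial>measure_pmf (samp e)) \<le> \<Phi> e"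
        using AE_pos by eventually_elim (rule order.trans[OF hyp pw])
    qed
    also have "\<dots> \<le> ennreal Bnd" by (rule int\<Phi>)
    finally show ?thesis .
  qed
  have NMg: "N \<le> nat \<lceil>real N powr \<gamma>\<rceil>" using NM M by simp
  show ?thesis
  proof
    show "total_expect (I_sample \<gamma> \<beta> N) F \<le> ennreal Bnd"
    proof (rule gen)
      fix e :: "nat \<Rightarrow> real" assume pos: "\<forall>k. e k > 0"
      show "(\<integral>\<^sup>+ks. ennreal (\<Sum>k\<leftarrow>ks. F (pp_atom e k)) \<partial>measure_pmf (I_sample \<gamma> \<beta> N e)) \<le> ennreal (real N * (U e / D e))"
        using bridge(1)[OF pos N NMg Fnn \<beta>(1)] unfolding UF D_def M by (simp add: times_divide_eq_right)
    qed
    show "total_expect (J_sample \<gamma> \<beta> N) F \<le> ennreal Bnd"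
    proof (rule gen)
      fix e :: "nat \<Rightarrow> real" assume pos: "\<forall>k. e k > 0"
      show "(\<integral>\<^sup>+ks. ennreal (\<Sum>k\<leftarrow>ks. F (pp_atom e k)) \<partial>measure_pmf (J_sample \<gamma> \<beta> N e)) \<le> ennreal (real N * (U e / D e))"
        using bridge(2)[OF pos N NMg Fnn \<beta>(1)] unfolding UF D_def M by (simp add: times_divide_eq_right)
    qed
  qed
qed



lemma powr_step:
  fixes \<beta> :: real and j :: nat
  assumes "0 < \<beta>" "\<beta> < 1" "j \<ge> 1"
  shows "real (Suc j) powr (1 - \<beta>) - real j powr (1 - \<beta>) \<le> (1 - \<beta>) * real j powr (- \<beta>)"
proof -
  have "\<exists>z. real j < z \<and> z < real (Suc j) \<and>
     real (Suc j) powr (1 - \<beta>) - real j powr (1 - \<beta>) = (real (Suc j) - real j) * ((1 - \<beta>) * z powr (1 - \<beta> - 1))"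
  proof (rule MVT2)
    fix x assume "real j \<le> x" "x \<le> real (Suc j)"
    then have "x > 0" using assms by simp
    then show "((\<lambda>z. z powr (1 - \<beta>)) has_real_derivative (1 - \<beta>) * x powr (1 - \<beta> - 1)) (at x)"
      by (rule has_real_derivative_powr)
  qed simp
  then obtain z where z: "real j < z" "z < real (Suc j)"
    "real (Suc j) powr (1 - \<beta>) - real j powr (1 - \<beta>) = (1 - \<beta>) * z powr (- \<beta>)" by auto
  have "z powr (-\<beta>) \<le> real j powr (-\<beta>)"
    using z assms by (intro powr_mono2') auto
  then show ?thesis using z assms by (simp add: mult_left_mono)
qed

lemma S0_lower:
  fixes \<beta> :: real
  assumes "0 < \<beta>" "\<beta> < 1" "1 \<le> N" "N \<le> M"
  shows "real (Suc M) powr (1 - \<beta>) - real N powr (1 - \<beta>) \<le> (1 - \<beta>) * (\<Sum>j\<in>{N..M}. real j powr (-\<beta>))"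
proof -
  have "real (Suc M) powr (1 - \<beta>) - real N powr (1 - \<beta>) = (\<Sum>j=N..M. real (Suc j) powr (1 - \<beta>) - real j powr (1 - \<beta>))"
    using sum_Suc_diff[of N M "\<lambda>j. real j powr (1 - \<beta>)"] assms by simp
  also have "\<dots> \<le> (\<Sum>j=N..M. (1 - \<beta>) * real j powr (- \<beta>))"
    using assms by (intro sum_mono powr_step) auto
  finally show ?thesis by (simp add: sum_distrib_left)
qed

lemma geom_tail:
  fixes \<rho> :: real
  assumes "0 < \<rho>" "\<rho> < 1"
  shows "(\<Sum>j\<in>{N..M}. \<rho> ^ j) \<le> \<rho> ^ N / (1 - \<rho>)"
proof -
  have "(\<Sum>j\<in>{N..M}. \<rho> ^ j) = (if M < N then 0 else (\<rho> ^ N - \<rho> ^ Suc M) / (1 - \<rho>))"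
    using assms by (simp add: sum_gp)
  also have "\<dots> \<le> \<rho> ^ N / (1 - \<rho>)"
    using assms by (auto simp: divide_right_mono)
  finally show ?thesis .
qed

lemma M_facts:
  fixes \<gamma> :: real and N :: nat
  assumes "\<gamma> > 1" "N \<ge> 1"
  shows "N \<le> nat \<lceil>real N powr \<gamma>\<rceil>" "real (nat \<lceil>real N powr \<gamma>\<rceil>) \<le> 2 * real N powr \<gamma>"
    "real N powr \<gamma> \<le> real (Suc (nat \<lceil>real N powr \<gamma>\<rceil>))"
proof -
  have g1: "real N powr 1 \<le> real N powr \<gamma>" using assms by (intro powr_mono) auto
  then have "real N \<le> real N powr \<gamma>" using assms by simp
  then show "N \<le> nat \<lceil>real N powr \<gamma>\<rceil>" by linarith
  have "1 \<le> real N powr \<gamma>" using g1 assms by simp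
  then show "real (nat \<lceil>real N powr \<gamma>\<rceil>) \<le> 2 * real N powr \<gamma>" by linarith
  show "real N powr \<gamma> \<le> real (Suc (nat \<lceil>real N powr \<gamma>\<rceil>))" by linarith
qed

lemma rho_facts:
  fixes \<delta> :: real
  assumes "0 < \<delta>" "\<delta> \<le> 1"
  defines "t \<equiv> \<delta> / 4" and "s \<equiv> \<delta>^2 / 16"
  defines "u \<equiv> s + t"
  shows "0 < s" "s \<le> 1" "0 < t" "u < 1" "0 \<le> u"
    "exp (- t * (1 + \<delta>)) / (1 - u) < 1" "0 < exp (- t * (1 + \<delta>)) / (1 - u)"
proof -
  have d2: "\<delta>^2 \<le> \<delta>" using assms by (simp add: power2_eq_square mult_le_cancel_left1)
  show "0 < s" "s \<le> 1" "0 < t" using assms d2 by (auto simp: s_def t_def)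
  show u1: "u < 1" "0 \<le> u" using assms d2 by (auto simp: u_def s_def t_def)
  have "1 < (1 + t * (1 + \<delta>)) * (1 - u)"
  proof -
    have "(1 + t * (1 + \<delta>)) * (1 - u) = 1 + \<delta>^2 * ((8 - 5 * \<delta> - \<delta>^2) / 64)"
      by (simp add: u_def s_def t_def power2_eq_square field_simps)
    moreover have "\<delta>^2 \<le> 1" using assms d2 by simp
    then have "(8 - 5 * \<delta> - \<delta>^2) / 64 > 0" using assms by simp
    moreover have "\<delta>^2 > 0" using assms by simp
    ultimately show ?thesis by (simp add: \<open>(8 - 5 * \<delta> - \<delta>^2) / 64 > 0\<close>)
  qed
  also have "\<dots> \<le> exp (t * (1 + \<delta>)) * (1 - u)"
    using u1 exp_ge_add_one_self[of "t * (1 + \<delta>)"] by (intro mult_right_mono) auto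
  finally have "1 < exp (t * (1 + \<delta>)) * (1 - u)" .
  moreover have "exp (- t * (1 + \<delta>)) / (1 - u) = 1 / (exp (t * (1 + \<delta>)) * (1 - u))"
    by (simp add: exp_minus divide_inverse)
  ultimately show "exp (- t * (1 + \<delta>)) / (1 - u) < 1" by simp
  show "0 < exp (- t * (1 + \<delta>)) / (1 - u)" using u1 by simp
qed

lemma real_bound:
  fixes \<gamma> \<beta> a b p \<delta> t s u C1 \<rho> e0 :: real and N :: nat
  assumes \<gamma>: "\<gamma> > 1" and \<beta>: "0 < \<beta>" "\<beta> < 1" and a: "a > 0" and p: "p = a + \<beta>" "p < 1" and b: "b \<ge> 0"
    and N: "N \<ge> 2" and s: "0 < s" and u: "0 \<le> u" "u < 1" and t: "t > 0"
    and C1: "C1 \<ge> 0" and \<rho>: "\<rho> = exp (- t * (1 + \<delta>)) / (1 - u)" "0 < \<rho>" "\<rho> < 1" and \<delta>: "\<delta> > 0"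
    and e0: "e0 = \<gamma> * (1 - \<beta>) - 1 + b * (p - 1)"
  defines "M \<equiv> nat \<lceil>real N powr \<gamma>\<rceil>"
  defines "S0 \<equiv> (\<Sum>j\<in>{N..M}. real j powr (-\<beta>))"
  defines "Bnd \<equiv> real N * ((1 + \<delta>) powr \<beta> / S0 * ((real N powr b) powr (1 - p) / (1 - p))
      + real M / s * (\<Sum>j\<in>{N..M}. exp (- t * (1 + \<delta>) * real j) * (C1 * (1 / (1 - u)) ^ (j - 1))))"
  shows "real N powr e0 * Bnd \<le> (1 + \<delta>) powr \<beta> * (1 - \<beta>) / (1 - p) / (1 - real N powr ((1 - \<beta>) * (1 - \<gamma>)))
     + 2 * C1 * (1 - u) / (s * (1 - \<rho>)) * (real N powr (\<gamma> * (1 - \<beta>) + \<gamma>) * \<rho> ^ N)"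
proof -
  define g where "g = \<gamma> * (1 - \<beta>)"
  have N1: "N \<ge> 1" and Npos: "real N > 0" using N by auto
  have NM: "N \<le> M" and M2: "real M \<le> 2 * real N powr \<gamma>" and MS: "real N powr \<gamma> \<le> real (Suc M)"
    using M_facts[OF \<gamma> N1] unfolding M_def by auto
  have S0L: "real (Suc M) powr (1 - \<beta>) - real N powr (1 - \<beta>) \<le> (1 - \<beta>) * S0"
    unfolding S0_def using S0_lower[OF \<beta> N1 NM] .
  have gt: "real N powr g \<le> real (Suc M) powr (1 - \<beta>)"
  proof -
    have "real N powr g = (real N powr \<gamma>) powr (1 - \<beta>)" by (simp add: g_def powr_powr)
    also have "\<dots> \<le> real (Suc M) powr (1 - \<beta>)" using MS \<beta> by (intro powr_mono2) auto
    finally show ?thesis .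
  qed
  have q_lt: "real N powr ((1 - \<beta>) * (1 - \<gamma>)) < 1"
    using N \<beta> \<gamma> by (intro powr_less_one) (auto simp: mult_pos_neg)
  have Ng_pos: "real N powr g > 0" using Npos by simp
  have den: "real N powr g - real N powr (1 - \<beta>) = real N powr g * (1 - real N powr ((1 - \<beta>) * (1 - \<gamma>)))"
    using Npos by (simp add: g_def right_diff_distrib powr_add[symmetric] algebra_simps)
  have denpos: "real N powr g - real N powr (1 - \<beta>) > 0" unfolding den using q_lt Ng_pos by simp
  have S0pos: "S0 > 0" unfolding S0_def using NM N1 by (intro sum_pos) auto
  have S0ge: "real N powr g - real N powr (1 - \<beta>) \<le> (1 - \<beta>) * S0" using S0L gt by linarith
  have ex1: "real N powr e0 * real N * (real N powr b) powr (1 - p) = real N powr g"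
  proof -
    have "real N powr e0 * real N * (real N powr b) powr (1 - p) = real N powr (e0 + 1 + b * (1 - p))"
      using Npos by (simp add: powr_add powr_powr)
    also have "e0 + 1 + b * (1 - p) = g" by (simp add: e0 g_def algebra_simps)
    finally show ?thesis .
  qed
  have T1: "real N powr e0 * (real N * ((1 + \<delta>) powr \<beta> / S0 * ((real N powr b) powr (1 - p) / (1 - p))))
      \<le> (1 + \<delta>) powr \<beta> * (1 - \<beta>) / (1 - p) / (1 - real N powr ((1 - \<beta>) * (1 - \<gamma>)))"
  proof -
    have "real N powr e0 * (real N * ((1 + \<delta>) powr \<beta> / S0 * ((real N powr b) powr (1 - p) / (1 - p))))
       = (1 + \<delta>) powr \<beta> / (1 - p) * (real N powr e0 * real N * (real N powr b) powr (1 - p) / S0)"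
      by (simp add: field_simps)
    also have "\<dots> = (1 + \<delta>) powr \<beta> / (1 - p) * (real N powr g / S0)" by (simp only: ex1)
    also have "real N powr g / S0 \<le> (1 - \<beta>) * real N powr g / (real N powr g - real N powr (1 - \<beta>))"
    proof -
      have "real N powr g / S0 = (1 - \<beta>) * real N powr g / ((1 - \<beta>) * S0)" using \<beta> by simp
      also have "\<dots> \<le> (1 - \<beta>) * real N powr g / (real N powr g - real N powr (1 - \<beta>))"
        using S0ge denpos \<beta> Ng_pos by (intro divide_left_mono) auto
      finally show ?thesis .
    qed
    also have "(1 - \<beta>) * real N powr g / (real N powr g - real N powr (1 - \<beta>))
        = (1 - \<beta>) / (1 - real N powr ((1 - \<beta>) * (1 - \<gamma>)))"
      unfolding den using Ng_pos by simp
    finally show ?thesis using p by (simp add: mult_left_mono divide_right_mono)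
  qed
  have sumeq: "(\<Sum>j\<in>{N..M}. exp (- t * (1 + \<delta>) * real j) * (C1 * (1 / (1 - u)) ^ (j - 1)))
      = C1 * (1 - u) * (\<Sum>j\<in>{N..M}. \<rho> ^ j)"
    unfolding sum_distrib_left
  proof (intro sum.cong refl)
    fix j assume "j \<in> {N..M}"
    then obtain k where k: "j = Suc k" using N1 by (cases j) auto
    have "exp (- t * (1 + \<delta>) * real j) = exp (- t * (1 + \<delta>)) ^ j"
      by (subst exp_of_nat_mult[symmetric]) (simp add: algebra_simps)
    then show "exp (- t * (1 + \<delta>) * real j) * (C1 * (1 / (1 - u)) ^ (j - 1)) = C1 * (1 - u) * \<rho> ^ j"
      using u unfolding k \<rho>(1) by (simp add: power_divide field_simps)
  qed
  have T2: "real N powr e0 * (real N * (real M / s * (\<Sum>j\<in>{N..M}. exp (- t * (1 + \<delta>) * real j) * (C1 * (1 / (1 - u)) ^ (j - 1)))))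
     \<le> 2 * C1 * (1 - u) / (s * (1 - \<rho>)) * (real N powr (\<gamma> * (1 - \<beta>) + \<gamma>) * \<rho> ^ N)"
  proof -
    have a1: "real N powr e0 * real N \<le> real N powr g"
    proof -
      have "real N powr e0 * real N = real N powr (e0 + 1)" using Npos by (simp add: powr_add)
      also have "\<dots> \<le> real N powr g"
        using N1 b p a by (intro powr_mono) (auto simp: e0 g_def mult_nonneg_nonpos)
      finally show ?thesis .
    qed
    have sg: "(\<Sum>j\<in>{N..M}. \<rho> ^ j) \<le> \<rho> ^ N / (1 - \<rho>)" using geom_tail \<rho> by blast
    have "real N powr e0 * (real N * (real M / s * (C1 * (1 - u) * (\<Sum>j\<in>{N..M}. \<rho> ^ j))))
        = (real N powr e0 * real N) * real M * (C1 * (1 - u) / s) * (\<Sum>j\<in>{N..M}. \<rho> ^ j)"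
      by (simp add: field_simps)
    also have "\<dots> \<le> real N powr g * (2 * real N powr \<gamma>) * (C1 * (1 - u) / s) * (\<rho> ^ N / (1 - \<rho>))"
      using a1 M2 sg C1 u s \<rho> by (intro mult_mono) (auto intro!: sum_nonneg)
    also have "\<dots> = 2 * C1 * (1 - u) / (s * (1 - \<rho>)) * (real N powr (\<gamma> * (1 - \<beta>) + \<gamma>) * \<rho> ^ N)"
    proof -
      have "real N powr g * real N powr \<gamma> = real N powr (\<gamma> * (1 - \<beta>) + \<gamma>)"
        by (simp add: g_def powr_add)
      then show ?thesis using s \<rho> by (simp add: field_simps)
    qed
    finally show ?thesis unfolding sumeq .
  qed
  have "real N powr e0 * Bnd = real N powr e0 * (real N * ((1 + \<delta>) powr \<beta> / S0 * ((real N powr b) powr (1 - p) / (1 - p))))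
     + real N powr e0 * (real N * (real M / s * (\<Sum>j\<in>{N..M}. exp (- t * (1 + \<delta>) * real j) * (C1 * (1 / (1 - u)) ^ (j - 1)))))"
    unfolding Bnd_def by (simp add: distrib_left)
  then show ?thesis using T1 T2 by linarith
qed

lemma lim_h:
  fixes q r \<rho> K1 K2 :: real
  assumes "q < 0" "0 < \<rho>" "\<rho> < 1"
  shows "(\<lambda>N::nat. K1 / (1 - real N powr q) + K2 * (real N powr r * \<rho> ^ N)) \<longlonglongrightarrow> K1"
proof -
  have "(\<lambda>N::nat. real N powr q) \<longlonglongrightarrow> 0" using assms by real_asymp
  then have 1: "(\<lambda>N::nat. K1 / (1 - real N powr q)) \<longlonglongrightarrow> K1 / (1 - 0)"
    by (intro tendsto_intros) auto
  have "(\<lambda>N::nat. real N powr r * \<rho> ^ N) \<longlonglongrightarrow> 0" using assms by real_asymp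
  then have 2: "(\<lambda>N::nat. K2 * (real N powr r * \<rho> ^ N)) \<longlonglongrightarrow> K2 * 0"
    by (intro tendsto_intros)
  show ?thesis using tendsto_add[OF 1 2] by simp
qed

lemma neg1_less_powr: "- 1 < (x::real) powr y"
  by (smt (verit) powr_ge_zero)

lemma limsup_delta:
  fixes \<gamma> \<beta> chi a b A \<delta> :: real
  assumes \<gamma>: "\<gamma> > 1" and \<beta>: "0 < \<beta>" "\<beta> < 1"
    and chi: "chi = (1 - \<gamma> * (1 - \<beta>)) / \<beta>"
    and a: "a > 0" and b: "b \<ge> 0"
    and A: "A = a + \<beta> - 1" "A < 0" and \<delta>: "0 < \<delta>" "\<delta> \<le> 1"
  shows "limsup (\<lambda>N::nat. ereal (real N powr (- chi * \<beta> + b * A)) *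
            enn2ereal (total_expect (I_sample \<gamma> \<beta> N)
              (\<lambda>x. x powr a * indicator {real N powr (- b)..} x)))
           \<le> ereal ((1 + \<delta>) powr \<beta> * (1 - \<beta>) / (1 - (a + \<beta>)))
    \<and> limsup (\<lambda>N::nat. ereal (real N powr (- chi * \<beta> + b * A)) *
            enn2ereal (total_expect (J_sample \<gamma> \<beta> N)
              (\<lambda>x. x powr a * indicator {real N powr (- b)..} x)))
           \<le> ereal ((1 + \<delta>) powr \<beta> * (1 - \<beta>) / (1 - (a + \<beta>)))"
proof -
  define p where "p = a + \<beta>"
  have p1: "p < 1" using A by (simp add: p_def)
  define t where "t = \<delta> / 4"
  define s where "s = \<delta>^2 / 16"
  define u where "u = s + t"
  note rf = rho_facts[OF \<delta>, folded t_def s_def, folded u_def]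
  define \<rho> where "\<rho> = exp (- t * (1 + \<delta>)) / (1 - u)"
  define C1 where "C1 = 1 / (1 - p) + 1 / (1 - u)"
  have C1: "C1 \<ge> 0" using rf p1 by (simp add: C1_def)
  define e0 where "e0 = \<gamma> * (1 - \<beta>) - 1 + b * (p - 1)"
  have e0eq: "- chi * \<beta> + b * A = e0" using \<beta> by (simp add: chi e0_def A p_def field_simps)
  define K1 where "K1 = (1 + \<delta>) powr \<beta> * (1 - \<beta>) / (1 - p)"
  define K2 where "K2 = 2 * C1 * (1 - u) / (s * (1 - \<rho>))"
  define h where "h N = K1 / (1 - real N powr ((1 - \<beta>) * (1 - \<gamma>))) + K2 * (real N powr (\<gamma> * (1 - \<beta>) + \<gamma>) * \<rho> ^ N)" for N :: nat
  define F where "F N = (\<lambda>x. x powr a * indicator {real N powr (- b)..} x :: real)" for N :: nat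
  define Bnd where "Bnd N = real N * ((1 + \<delta>) powr \<beta> / (\<Sum>j\<in>{N..nat \<lceil>real N powr \<gamma>\<rceil>}. real j powr (-\<beta>)) * ((real N powr b) powr (1 - p) / (1 - p))
      + real (nat \<lceil>real N powr \<gamma>\<rceil>) / s * (\<Sum>j\<in>{N..nat \<lceil>real N powr \<gamma>\<rceil>}. exp (- t * (1 + \<delta>) * real j) * (C1 * (1 / (1 - u)) ^ (j - 1))))" for N :: nat
  have Bnn: "Bnd N \<ge> 0" for N
    unfolding Bnd_def using rf p1 C1 powr_ge_zero[of "real N" \<gamma>]
    by (intro mult_nonneg_nonneg add_nonneg_nonneg divide_nonneg_nonneg sum_nonneg) (auto simp: neg1_less_powr)
  have hb: "real N powr e0 * Bnd N \<le> h N" if "N \<ge> 2" for N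
    unfolding h_def K1_def K2_def Bnd_def
    by (rule real_bound[OF \<gamma> \<beta> a p_def p1 b that]) (use rf C1 \<delta> in \<open>auto simp: \<rho>_def e0_def\<close>)
  have TE: "total_expect (I_sample \<gamma> \<beta> N) (F N) \<le> ennreal (Bnd N) \<and> total_expect (J_sample \<gamma> \<beta> N) (F N) \<le> ennreal (Bnd N)"
    if "N \<ge> 1" for N
    unfolding F_def Bnd_def C1_def
    by (rule main_bound[OF \<beta> a p_def p1 b that refl M_facts(1)[OF \<gamma> that] \<delta>(1) rf(3) rf(1) rf(2) u_def rf(4)])
  have lim: "limsup (\<lambda>N. ereal (real N powr e0) * enn2ereal (T N)) \<le> ereal K1"
    if T: "\<And>N. N \<ge> 1 \<Longrightarrow> T N \<le> ennreal (Bnd N)" for T :: "nat \<Rightarrow> ennreal"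
  proof -
    have ev: "eventually (\<lambda>N. ereal (real N powr e0) * enn2ereal (T N) \<le> ereal (h N)) sequentially"
      unfolding eventually_sequentially
    proof (intro exI allI impI)
      fix N :: nat assume N: "N \<ge> 2"
      have "enn2ereal (T N) \<le> enn2ereal (ennreal (Bnd N))"
        using T[of N] N by (simp add: less_eq_ennreal.rep_eq)
      also have "\<dots> = ereal (Bnd N)" using Bnn by simp
      finally have "ereal (real N powr e0) * enn2ereal (T N) \<le> ereal (real N powr e0) * ereal (Bnd N)"
        by (intro ereal_mult_left_mono) auto
      also have "\<dots> = ereal (real N powr e0 * Bnd N)" by simp
      also have "\<dots> \<le> ereal (h N)" using hb[OF N] by simp
      finally show "ereal (real N powr e0) * enn2ereal (T N) \<le> ereal (h N)" .
    qed
    have "limsup (\<lambda>N. ereal (real N powr e0) * enn2ereal (T N)) \<le> limsup (\<lambda>N. ereal (h N))"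
      by (rule Limsup_mono[OF ev])
    also have "limsup (\<lambda>N. ereal (h N)) = ereal K1"
    proof (rule lim_imp_Limsup)
      have "h \<longlonglongrightarrow> K1" unfolding h_def
        by (rule lim_h) (use \<gamma> \<beta> rf in \<open>auto simp: \<rho>_def mult_pos_neg\<close>)
      then show "(\<lambda>N. ereal (h N)) \<longlonglongrightarrow> ereal K1" by (rule tendsto_ereal)
    qed simp
    finally show ?thesis .
  qed
  show ?thesis
    unfolding e0eq K1_def[unfolded p_def, symmetric] F_def[symmetric]
    using lim[of "\<lambda>N. total_expect (I_sample \<gamma> \<beta> N) (F N)"] lim[of "\<lambda>N. total_expect (J_sample \<gamma> \<beta> N) (F N)"] TE
    by auto
qed

theorem corollary4p5:
  fixes \<gamma> \<beta> chi a b A :: real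
  assumes "\<gamma> > 1" and "0 < \<beta>" and "\<beta> < 1"
    and "chi = (1 - \<gamma> * (1 - \<beta>)) / \<beta>"
    and "a > 0" and "b \<ge> 0"
    and "A = a + \<beta> - 1" and "A < 0"
  shows "limsup (\<lambda>N::nat. ereal (real N powr (- chi * \<beta> + b * A)) *
            enn2ereal (total_expect (I_sample \<gamma> \<beta> N)
              (\<lambda>x. x powr a * indicator {real N powr (- b)..} x)))
           \<le> ereal ((1 - \<beta>) * (1 / \<bar>A\<bar>))
    \<and> limsup (\<lambda>N::nat. ereal (real N powr (- chi * \<beta> + b * A)) *
            enn2ereal (total_expect (J_sample \<gamma> \<beta> N)
              (\<lambda>x. x powr a * indicator {real N powr (- b)..} x)))
           \<le> ereal ((1 - \<beta>) * (1 / \<bar>A\<bar>))"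
proof -
  define c where "c = (1 - \<beta>) * (1 / \<bar>A\<bar>)"
  have cpos: "c > 0" using assms by (simp add: c_def)
  have ceq: "(1 + \<delta>) powr \<beta> * (1 - \<beta>) / (1 - (a + \<beta>)) = (1 + \<delta>) powr \<beta> * c" for \<delta>
    using assms by (simp add: c_def abs_if)
  have key: "ereal ((1 + \<delta>) powr \<beta> * c) \<le> ereal c + ereal \<epsilon>"
    if "\<epsilon> > 0" and "\<delta> = min 1 (\<epsilon> / c)" for \<epsilon> \<delta>
  proof -
    have d: "0 < \<delta>" "\<delta> \<le> 1" "\<delta> \<le> \<epsilon> / c" using that cpos by auto
    have "(1 + \<delta>) powr \<beta> \<le> (1 + \<delta>) powr 1" using d assms by (intro powr_mono) auto
    then have "(1 + \<delta>) powr \<beta> * c \<le> (1 + \<delta>) * c" using d cpos by (intro mult_right_mono) auto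
    also have "\<dots> = c + \<delta> * c" by (simp add: algebra_simps)
    also have "\<delta> * c \<le> \<epsilon>" using d cpos by (simp add: le_divide_eq)
    finally have "(1 + \<delta>) powr \<beta> * c \<le> c + \<epsilon>" by simp
    then show ?thesis by simp
  qed
  let ?QI = "limsup (\<lambda>N::nat. ereal (real N powr (- chi * \<beta> + b * A)) *
            enn2ereal (total_expect (I_sample \<gamma> \<beta> N)
              (\<lambda>x. x powr a * indicator {real N powr (- b)..} x)))"
  let ?QJ = "limsup (\<lambda>N::nat. ereal (real N powr (- chi * \<beta> + b * A)) *
            enn2ereal (total_expect (J_sample \<gamma> \<beta> N)
              (\<lambda>x. x powr a * indicator {real N powr (- b)..} x)))"
  have "?QI \<le> ereal c + ereal \<epsilon> \<and> ?QJ \<le> ereal c + ereal \<epsilon>" if "\<epsilon> > 0" for \<epsilon>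
  proof -
    define \<delta> where "\<delta> = min 1 (\<epsilon> / c)"
    have d: "0 < \<delta>" "\<delta> \<le> 1" using that cpos by (auto simp: \<delta>_def)
    have L: "?QI \<le> ereal ((1 + \<delta>) powr \<beta> * c) \<and> ?QJ \<le> ereal ((1 + \<delta>) powr \<beta> * c)"
      using limsup_delta[OF assms d] unfolding ceq .
    have K: "ereal ((1 + \<delta>) powr \<beta> * c) \<le> ereal c + ereal \<epsilon>" by (rule key[OF that \<delta>_def])
    show ?thesis using order.trans[OF conjunct1[OF L] K] order.trans[OF conjunct2[OF L] K] by (rule conjI)
  qed
  then have E: "\<And>\<epsilon>. \<epsilon> > 0 \<Longrightarrow> ?QI \<le> ereal c + ereal \<epsilon>" "\<And>\<epsilon>. \<epsilon> > 0 \<Longrightarrow> ?QJ \<le> ereal c + ereal \<epsilon>"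
    by blast+
  have "?QI \<le> ereal c" by (rule ereal_le_epsilon2) (rule E(1))
  moreover have "?QJ \<le> ereal c" by (rule ereal_le_epsilon2) (rule E(2))
  ultimately show ?thesis unfolding c_def by (rule conjI)
qed

end
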